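(* Let $s \geq 3$ be a fixed integer. Suppose there are constants $C, c > 0$ such that for every sufficiently large $n$ there exists a $K_s$-free $(n,d,\lambda)$-graph with $\lambda \leq C\sqrt{d}$ and $d \geq c\, n^{1 - \frac{1}{2s-3}}$. Then there is a constant $c' > 0$ (depending on $s$, $C$, $c$) such that for all sufficiently large $t$, \[ r(s,t) \;\geq\; c'\,\frac{t^{s-1}}{(\log t)^{2s-4}}. \]
   Context: For integers $s,t \geq 2$, the Ramsey number $r(s,t)$ is the minimum $n$ such that every $n$-vertex graph contains either a clique of order $s$ or an independent set of size $t$. An $(n,d,\lambda)$-graph is an $n$-vertex $d$-regular graph whose adjacency matrix has eigenvalues $\lambda_1 \geq \lambda_2 \geq \dots \geq \lambda_n$ with $\max\{|\lambda_2|,|\lambda_n|\} = \lambda$. A graph is $K_s$-free if it contains no complete subgraph on $s$ vertices. An $(n,d,\lambda)$-graph with $\lambda = O(\sqrt{d})$ is called spectrally extremal. *)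

theory Defs
  imports Complex_Main "Jordan_Normal_Form.Char_Poly"
begin

definition simple_graph :: "nat \<Rightarrow> (nat \<Rightarrow> nat \<Rightarrow> bool) \<Rightarrow> bool" where
  "simple_graph n E \<longleftrightarrow> (\<forall>u<n. \<forall>v<n. E u v \<longrightarrow> E v u) \<and> (\<forall>v<n. \<not> E v v)"

definition has_clique :: "nat \<Rightarrow> (nat \<Rightarrow> nat \<Rightarrow> bool) \<Rightarrow> nat \<Rightarrow> bool" where
  "has_clique n E s \<longleftrightarrow> (\<exists>S. S \<subseteq> {0..<n} \<and> card S = s \<and> (\<forall>x\<in>S. \<forall>y\<in>S. x \<noteq> y \<longrightarrow> E x y))"

definition has_indep :: "nat \<Rightarrow> (nat \<Rightarrow> nat \<Rightarrow> bool) \<Rightarrow> nat \<Rightarrow> bool" where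
  "has_indep n E t \<longleftrightarrow> (\<exists>S. S \<subseteq> {0..<n} \<and> card S = t \<and> (\<forall>x\<in>S. \<forall>y\<in>S. x \<noteq> y \<longrightarrow> \<not> E x y))"

definition ramsey :: "nat \<Rightarrow> nat \<Rightarrow> nat" where
  "ramsey s t = (LEAST n. \<forall>E. simple_graph n E \<longrightarrow> has_clique n E s \<or> has_indep n E t)"

definition adj_mat :: "nat \<Rightarrow> (nat \<Rightarrow> nat \<Rightarrow> bool) \<Rightarrow> real mat" where
  "adj_mat n E = mat n n (\<lambda>(i,j). if E i j then 1 else 0)"

text \<open>as is the list of eigenvalues (with multiplicity) of the adjacency matrix,
  sorted in non-increasing order: lambda_1 = as!0 \<ge> ... \<ge> lambda_n = as!(n-1).\<close>
definition adj_spectrum :: "nat \<Rightarrow> (nat \<Rightarrow> nat \<Rightarrow> bool) \<Rightarrow> real list \<Rightarrow> bool" where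
  "adj_spectrum n E as \<longleftrightarrow> length as = n \<and> sorted_wrt (\<ge>) as \<and>
     char_poly (adj_mat n E) = (\<Prod>a\<leftarrow>as. [:- a, 1:])"

definition regular :: "nat \<Rightarrow> (nat \<Rightarrow> nat \<Rightarrow> bool) \<Rightarrow> nat \<Rightarrow> bool" where
  "regular n E d \<longleftrightarrow> (\<forall>v<n. card {u. u < n \<and> E v u} = d)"

definition ndl_graph :: "nat \<Rightarrow> nat \<Rightarrow> real \<Rightarrow> (nat \<Rightarrow> nat \<Rightarrow> bool) \<Rightarrow> bool" where
  "ndl_graph n d lam E \<longleftrightarrow> simple_graph n E \<and> regular n E d \<and>
     (\<exists>as. adj_spectrum n E as \<and> lam = max \<bar>as ! 1\<bar> \<bar>as ! (n - 1)\<bar>)"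

end

theory Submission
  imports Defs "HOL-Analysis.Convex" "Jordan_Normal_Form.Schur_Decomposition" "HOL-Library.Ramsey" "HOL-Real_Asymp.Real_Asymp"
begin


lemma cs_sum: "(\<Sum>i\<in>I. a i * b i)\<^sup>2 \<le> (\<Sum>i\<in>I. (a i)\<^sup>2) * (\<Sum>i\<in>I. ((b i)::real)\<^sup>2)"
  by (rule Cauchy_Schwarz_ineq_sum)

definition mv :: "nat \<Rightarrow> real mat \<Rightarrow> (nat \<Rightarrow> real) \<Rightarrow> nat \<Rightarrow> real" where
  "mv n X y = (\<lambda>i. \<Sum>k<n. X $$ (i,k) * y k)"

definition ip :: "nat \<Rightarrow> (nat \<Rightarrow> real) \<Rightarrow> (nat \<Rightarrow> real) \<Rightarrow> real" where
  "ip n f g = (\<Sum>i<n. f i * g i)"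

definition N2 :: "nat \<Rightarrow> (nat \<Rightarrow> real) \<Rightarrow> real" where
  "N2 n f = (\<Sum>i<n. (f i)\<^sup>2)"

lemma mult_entry:
  assumes "X \<in> carrier_mat n n" "Y \<in> carrier_mat n n" "i < n" "j < n"
  shows "(X * Y) $$ (i,j) = (\<Sum>k<n. X $$ (i,k) * Y $$ (k,j))"
  using assms by (simp add: scalar_prod_def atLeast0LessThan)

lemma mv_mult:
  assumes "X \<in> carrier_mat n n" "Y \<in> carrier_mat n n" "i < n"
  shows "mv n (X * Y) y i = mv n X (mv n Y y) i"
proof -
  have e: "\<And>k. k \<in> {..<n} \<Longrightarrow> (X * Y) $$ (i,k) * y k = (\<Sum>j<n. X $$ (i,j) * Y $$ (j,k)) * y k"
    using mult_entry[OF assms] by auto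
  have "mv n (X * Y) y i = (\<Sum>k<n. (\<Sum>j<n. X $$ (i,j) * Y $$ (j,k)) * y k)"
    unfolding mv_def by (rule sum.cong[OF refl e])
  also have "\<dots> = (\<Sum>k<n. \<Sum>j<n. X $$ (i,j) * (Y $$ (j,k) * y k))"
    by (simp add: sum_distrib_right mult.assoc)
  also have "\<dots> = (\<Sum>j<n. \<Sum>k<n. X $$ (i,j) * (Y $$ (j,k) * y k))"
    by (rule sum.swap)
  also have "\<dots> = (\<Sum>j<n. X $$ (i,j) * (\<Sum>k<n. Y $$ (j,k) * y k))"
    by (simp add: sum_distrib_left)
  finally show ?thesis unfolding mv_def .
qed

lemma ip_sym:
  assumes "\<And>i k. i < n \<Longrightarrow> k < n \<Longrightarrow> X $$ (i,k) = X $$ (k,i)"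
  shows "ip n f (mv n X g) = ip n (mv n X f) g"
proof -
  have "ip n f (mv n X g) = (\<Sum>i<n. \<Sum>k<n. f i * X $$ (i,k) * g k)"
    unfolding ip_def mv_def by (simp add: sum_distrib_left mult.assoc)
  also have "\<dots> = (\<Sum>k<n. \<Sum>i<n. f i * X $$ (i,k) * g k)"
    by (rule sum.swap)
  also have "\<dots> = (\<Sum>k<n. \<Sum>i<n. X $$ (k,i) * f i * g k)"
    using assms by (intro sum.cong refl) (simp add: mult.commute)
  also have "\<dots> = ip n (mv n X f) g"
    unfolding ip_def mv_def by (simp add: sum_distrib_right)
  finally show ?thesis .
qed

lemma ip_cs: "(ip n f g)\<^sup>2 \<le> N2 n f * N2 n g"
  unfolding ip_def N2_def by (rule cs_sum)

lemma N2_nonneg: "N2 n f \<ge> 0"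
  unfolding N2_def by (simp add: sum_nonneg)

lemma pow_mat_add:
  assumes "X \<in> carrier_mat n n"
  shows "X ^\<^sub>m (a + b) = X ^\<^sub>m a * X ^\<^sub>m b"
proof (induction b)
  case 0
  then show ?case using assms by simp
next
  case (Suc b)
  have "X ^\<^sub>m (a + Suc b) = (X ^\<^sub>m a * X ^\<^sub>m b) * X" using Suc by simp
  also have "\<dots> = X ^\<^sub>m a * (X ^\<^sub>m b * X)"
    using assms by (intro assoc_mult_mat[of _ n n _ n _ n]) auto
  finally show ?case by simp
qed

lemma pow_mat_one: "X \<in> carrier_mat n n \<Longrightarrow> X ^\<^sub>m 1 = X"
  by simp

lemma A_carrier: "adj_mat n E \<in> carrier_mat n n"
  unfolding adj_mat_def by simp

lemma A_entry: "i < n \<Longrightarrow> j < n \<Longrightarrow> adj_mat n E $$ (i,j) = (if E i j then 1 else 0)"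
  unfolding adj_mat_def by simp

lemma A_sym: "simple_graph n E \<Longrightarrow> i < n \<Longrightarrow> j < n \<Longrightarrow> adj_mat n E $$ (i,j) = adj_mat n E $$ (j,i)"
  unfolding simple_graph_def by (auto simp: A_entry)

lemma A_rowsum:
  assumes "regular n E d" "i < n"
  shows "(\<Sum>k<n. adj_mat n E $$ (i,k)) = real d"
proof -
  have "(\<Sum>k<n. adj_mat n E $$ (i,k)) = (\<Sum>k<n. if E i k then 1 else (0::real))"
    using assms by (intro sum.cong) (auto simp: A_entry)
  also have "\<dots> = real (card ({..<n} \<inter> Collect (E i)))"
    by (simp add: sum.If_cases)
  also have "{..<n} \<inter> Collect (E i) = {u. u < n \<and> E i u}" by auto
  finally show ?thesis using assms unfolding regular_def by simp
qed

lemma pow_sym: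
  assumes "simple_graph n E" "i < n" "k < n"
  shows "(adj_mat n E ^\<^sub>m K) $$ (i,k) = (adj_mat n E ^\<^sub>m K) $$ (k,i)"
  using assms(2,3)
proof (induction K arbitrary: i k)
  case 0
  then show ?case using A_carrier[of n E] by (auto simp: one_mat_def)
next
  case (Suc K)
  let ?A = "adj_mat n E"
  have C: "?A \<in> carrier_mat n n" "?A ^\<^sub>m K \<in> carrier_mat n n" using A_carrier by auto
  have "?A ^\<^sub>m Suc K = ?A ^\<^sub>m (K + 1)" by simp
  have e1: "?A ^\<^sub>m Suc K = ?A ^\<^sub>m K * ?A" by simp
  have e2: "?A ^\<^sub>m Suc K = ?A * ?A ^\<^sub>m K"
    using pow_mat_add[OF C(1), of 1 K] C by simp
  have "(?A ^\<^sub>m Suc K) $$ (i,k) = (\<Sum>j<n. (?A ^\<^sub>m K) $$ (i,j) * ?A $$ (j,k))"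
    unfolding e1 by (rule mult_entry[OF C(2) C(1) Suc.prems])
  also have "\<dots> = (\<Sum>j<n. ?A $$ (k,j) * (?A ^\<^sub>m K) $$ (j,i))"
    using Suc assms(1) A_sym[OF assms(1)] by (intro sum.cong refl) (simp add: mult.commute)
  also have "\<dots> = (?A ^\<^sub>m Suc K) $$ (k,i)"
    unfolding e2 by (rule mult_entry[OF C(1) C(2) Suc.prems(2,1), symmetric])
  finally show ?case .
qed

lemma pow_rowsum:
  assumes "regular n E d" "i < n"
  shows "(\<Sum>k<n. (adj_mat n E ^\<^sub>m K) $$ (i,k)) = real d ^ K"
  using assms(2)
proof (induction K arbitrary: i)
  case 0
  then show ?case using A_carrier[of n E] by (simp add: one_mat_def sum.If_cases)
next
  case (Suc K)
  let ?A = "adj_mat n E"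
  have C: "?A \<in> carrier_mat n n" "?A ^\<^sub>m K \<in> carrier_mat n n" using A_carrier by auto
  have "(\<Sum>k<n. (?A ^\<^sub>m Suc K) $$ (i,k)) = (\<Sum>k<n. \<Sum>j<n. (?A ^\<^sub>m K) $$ (i,j) * ?A $$ (j,k))"
    using Suc.prems by (intro sum.cong refl) (simp only: pow_mat.simps, rule mult_entry[OF C(2) C(1)], auto)
  also have "\<dots> = (\<Sum>j<n. \<Sum>k<n. (?A ^\<^sub>m K) $$ (i,j) * ?A $$ (j,k))"
    by (rule sum.swap)
  also have "\<dots> = (\<Sum>j<n. (?A ^\<^sub>m K) $$ (i,j) * real d)"
    using A_rowsum[OF assms(1)] by (intro sum.cong refl) (simp add: sum_distrib_left[symmetric])
  also have "\<dots> = real d ^ Suc K"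
    using Suc by (simp add: sum_distrib_right[symmetric])
  finally show ?case .
qed

lemma trace_sq:
  assumes "simple_graph n E"
  shows "(\<Sum>i<n. (adj_mat n E ^\<^sub>m (2*K)) $$ (i,i)) = (\<Sum>i<n. \<Sum>k<n. ((adj_mat n E ^\<^sub>m K) $$ (i,k))\<^sup>2)"
proof (intro sum.cong refl)
  fix i assume i: "i \<in> {..<n}"
  let ?A = "adj_mat n E"
  have C: "?A \<in> carrier_mat n n" "?A ^\<^sub>m K \<in> carrier_mat n n" using A_carrier by auto
  have "?A ^\<^sub>m (2*K) = ?A ^\<^sub>m K * ?A ^\<^sub>m K" using pow_mat_add[OF C(1), of K K] by (simp add: mult_2)
  then have "(?A ^\<^sub>m (2*K)) $$ (i,i) = (\<Sum>k<n. (?A ^\<^sub>m K) $$ (i,k) * (?A ^\<^sub>m K) $$ (k,i))"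
    using mult_entry[OF C(2) C(2)] i by simp
  also have "\<dots> = (\<Sum>k<n. ((?A ^\<^sub>m K) $$ (i,k))\<^sup>2)"
    using pow_sym[OF assms] i by (intro sum.cong refl) (simp add: power2_eq_square)
  finally show "(?A ^\<^sub>m (2*K)) $$ (i,i) = (\<Sum>k<n. ((?A ^\<^sub>m K) $$ (i,k))\<^sup>2)" .
qed

definition tr :: "nat \<Rightarrow> real mat \<Rightarrow> real" where
  "tr n X = (\<Sum>i<n. X $$ (i,i))"

lemma tr_comm:
  assumes "X \<in> carrier_mat n n" "Y \<in> carrier_mat n n"
  shows "tr n (X * Y) = tr n (Y * X)"
proof -
  have "tr n (X * Y) = (\<Sum>i<n. \<Sum>k<n. X $$ (i,k) * Y $$ (k,i))"
    unfolding tr_def by (intro sum.cong refl) (rule mult_entry[OF assms], auto)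
  also have "\<dots> = (\<Sum>k<n. \<Sum>i<n. Y $$ (k,i) * X $$ (i,k))"
    by (subst sum.swap) (simp add: mult.commute)
  also have "\<dots> = tr n (Y * X)"
    unfolding tr_def by (intro sum.cong refl) (rule mult_entry[OF assms(2,1), symmetric], auto)
  finally show ?thesis .
qed

lemma upper_tri_pow:
  assumes B: "B \<in> carrier_mat n n" and ut: "upper_triangular B"
  shows "(\<forall>i<n. \<forall>j<i. (B ^\<^sub>m K) $$ (i,j) = 0) \<and> (\<forall>i<n. (B ^\<^sub>m K) $$ (i,i) = (B $$ (i,i)) ^ K)"
proof (induction K)
  case 0
  then show ?case using B by (auto simp: one_mat_def)
next
  case (Suc K)
  have C: "B ^\<^sub>m K \<in> carrier_mat n n" using B by auto
  have utB: "\<And>i j. i < n \<Longrightarrow> j < i \<Longrightarrow> B $$ (i,j) = 0" using ut B unfolding upper_triangular_def by auto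
  have ent: "\<And>i j. i < n \<Longrightarrow> j < n \<Longrightarrow> (B ^\<^sub>m Suc K) $$ (i,j) = (\<Sum>k<n. (B ^\<^sub>m K) $$ (i,k) * B $$ (k,j))"
    by (simp only: pow_mat.simps) (rule mult_entry[OF C B])
  have lo: "(B ^\<^sub>m Suc K) $$ (i,j) = 0" if "i < n" "j < i" for i j
  proof -
    have "(\<Sum>k<n. (B ^\<^sub>m K) $$ (i,k) * B $$ (k,j)) = 0"
    proof (intro sum.neutral ballI)
      fix k assume "k \<in> {..<n}"
      show "(B ^\<^sub>m K) $$ (i,k) * B $$ (k,j) = 0"
        using Suc that utB[of k j] \<open>k \<in> {..<n}\<close> by (cases "k < i") auto
    qed
    then show ?thesis using ent[of i j] that by simp
  qed
  have di: "(B ^\<^sub>m Suc K) $$ (i,i) = (B $$ (i,i)) ^ Suc K" if "i < n" for i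
  proof -
    have "(\<Sum>k<n. (B ^\<^sub>m K) $$ (i,k) * B $$ (k,i)) = (B ^\<^sub>m K) $$ (i,i) * B $$ (i,i) + (\<Sum>k\<in>{..<n}-{i}. (B ^\<^sub>m K) $$ (i,k) * B $$ (k,i))"
      using that by (subst sum.remove[of _ i]) auto
    also have "(\<Sum>k\<in>{..<n}-{i}. (B ^\<^sub>m K) $$ (i,k) * B $$ (k,i)) = 0"
    proof (intro sum.neutral ballI)
      fix k assume k: "k \<in> {..<n}-{i}"
      show "(B ^\<^sub>m K) $$ (i,k) * B $$ (k,i) = 0"
        using Suc that utB[of k i] k by (cases "k < i") auto
    qed
    finally show ?thesis using ent[of i i] that Suc by (simp add: power_commutes)
  qed
  show ?case using lo di by auto
qed

lemma trace_pow_spec: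
  assumes "adj_spectrum n E as"
  shows "tr n (adj_mat n E ^\<^sub>m K) = (\<Sum>i<n. (as!i) ^ K)"
proof -
  let ?A = "adj_mat n E"
  have A: "?A \<in> carrier_mat n n" by (rule A_carrier)
  have cp: "char_poly ?A = (\<Prod>a\<leftarrow>as. [:- a, 1:])" and len: "length as = n"
    using assms unfolding adj_spectrum_def by auto
  obtain B P Q where sd: "schur_decomposition ?A as = (B,P,Q)" by (cases "schur_decomposition ?A as") auto
  from schur_decomposition[OF A cp sd]
  have sim: "similar_mat_wit ?A B P Q" and ut: "upper_triangular B" and dg: "diag_mat B = as" by auto
  note W = similar_mat_witD2[OF A sim]
  have BK: "B ^\<^sub>m K \<in> carrier_mat n n" using W by auto
  have "?A ^\<^sub>m K = P * B ^\<^sub>m K * Q" by (rule similar_mat_wit_pow_id[OF sim])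
  then have "tr n (?A ^\<^sub>m K) = tr n (Q * (P * B ^\<^sub>m K))"
    using tr_comm[of "P * B ^\<^sub>m K" n Q] W BK by simp
  also have "Q * (P * B ^\<^sub>m K) = (Q * P) * B ^\<^sub>m K"
    using W BK by (intro assoc_mult_mat[symmetric, of Q n n P n "B ^\<^sub>m K" n]) auto
  also have "\<dots> = B ^\<^sub>m K" unfolding W(2) by (rule left_mult_one_mat[OF BK])
  also have "tr n (B ^\<^sub>m K) = (\<Sum>i<n. (B $$ (i,i)) ^ K)"
    unfolding tr_def using upper_tri_pow[OF W(5) ut] by simp
  also have "\<dots> = (\<Sum>i<n. (as!i) ^ K)"
  proof (intro sum.cong refl)
    fix i assume "i \<in> {..<n}"
    then show "(B $$ (i,i)) ^ K = (as!i) ^ K"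
      using dg W(5) unfolding diag_mat_def by auto
  qed
  finally show ?thesis .
qed

lemma poly_prod_root: "a \<in> set as \<Longrightarrow> poly (\<Prod>x\<leftarrow>as. [:- x, 1:]) (a::real) = 0"
  by (induction as) auto

lemma eig_bound:
  assumes sg: "simple_graph n E" and rg: "regular n E d" and sp: "adj_spectrum n E as" and i: "i < n"
  shows "\<bar>as!i\<bar> \<le> real d"
proof -
  let ?A = "adj_mat n E"
  let ?k = "as!i"
  have A: "?A \<in> carrier_mat n n" by (rule A_carrier)
  have cp: "char_poly ?A = (\<Prod>a\<leftarrow>as. [:- a, 1:])" and len: "length as = n"
    using sp unfolding adj_spectrum_def by auto
  have "poly (char_poly ?A) ?k = 0" unfolding cp using i len by (intro poly_prod_root) auto
  then have "eigenvalue ?A ?k" using eigenvalue_root_char_poly[OF A] by simp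
  then obtain v where ev: "eigenvector ?A v ?k" unfolding eigenvalue_def by auto
  have v: "v \<in> carrier_vec n" "v \<noteq> 0\<^sub>v n" "?A *\<^sub>v v = ?k \<cdot>\<^sub>v v"
    using ev A unfolding eigenvector_def by auto
  define m where "m = Max ((\<lambda>l. \<bar>v $ l\<bar>) ` {..<n})"
  have ne: "{..<n} \<noteq> {}" using i by auto
  have "m \<in> (\<lambda>l. \<bar>v $ l\<bar>) ` {..<n}" unfolding m_def using ne by (intro Max_in) auto
  then obtain j where j: "j < n" "\<bar>v $ j\<bar> = m" by auto
  have mx: "\<bar>v $ l\<bar> \<le> m" if "l < n" for l
    unfolding m_def using that by (intro Max_ge) auto
  obtain l where l: "l < n" "v $ l \<noteq> 0"
  proof (rule ccontr)
    assume "\<not> thesis"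
    then have "\<forall>l<n. v $ l = 0" using that by blast
    then have "v = 0\<^sub>v n" using v(1) by (intro eq_vecI) auto
    then show False using v(2) by simp
  qed
  have mpos: "m > 0" using mx[OF l(1)] l(2) by linarith
  have "?k * v $ j = (?A *\<^sub>v v) $ j" using v(3) v(1) j(1) by simp
  also have "\<dots> = (\<Sum>l<n. ?A $$ (j,l) * v $ l)"
    using A v(1) j(1) by (simp add: scalar_prod_def atLeast0LessThan)
  finally have eq: "?k * v $ j = (\<Sum>l<n. ?A $$ (j,l) * v $ l)" .
  have "\<bar>?k\<bar> * m = \<bar>\<Sum>l<n. ?A $$ (j,l) * v $ l\<bar>" using eq j(2) by (metis abs_mult)
  also have "\<dots> \<le> (\<Sum>l<n. \<bar>?A $$ (j,l) * v $ l\<bar>)" by (rule sum_abs)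
  also have "\<dots> \<le> (\<Sum>l<n. ?A $$ (j,l) * m)"
  proof (intro sum_mono)
    fix l assume l: "l \<in> {..<n}"
    have "?A $$ (j,l) \<ge> 0" using l j by (simp add: A_entry)
    then show "\<bar>?A $$ (j,l) * v $ l\<bar> \<le> ?A $$ (j,l) * m"
      using mx[of l] l by (simp add: abs_mult mult_left_mono)
  qed
  also have "\<dots> = (\<Sum>l<n. ?A $$ (j,l)) * m" by (rule sum_distrib_right[symmetric])
  also have "\<dots> = real d * m" using A_rowsum[OF rg j(1)] by simp
  finally show ?thesis using mpos by simp
qed

lemma spec_sum_bound:
  assumes sg: "simple_graph n E" and rg: "regular n E d" and sp: "adj_spectrum n E as"
    and lam: "lam = max \<bar>as ! 1\<bar> \<bar>as ! (n - 1)\<bar>" and n: "n \<ge> 2"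
  shows "(\<Sum>i<n. (as!i) ^ (2*K)) \<le> real d ^ (2*K) + real (n - 1) * lam ^ (2*K)"
proof -
  have len: "length as = n" and so: "sorted_wrt (\<ge>) as" using sp unfolding adj_spectrum_def by auto
  have b: "\<bar>as!i\<bar> \<le> lam" if "1 \<le> i" "i < n" for i
  proof -
    have "as!1 \<ge> as!i"
    proof (cases "i = 1")
      case False
      then have "1 < i" using that by simp
      from sorted_wrt_nth_less[OF so this] show ?thesis using that len by simp
    qed simp
    moreover have "as!i \<ge> as!(n-1)"
    proof (cases "i = n - 1")
      case False
      then have "i < n - 1" using that by simp
      from sorted_wrt_nth_less[OF so this] show ?thesis using that len by simp
    qed simp
    ultimately show ?thesis unfolding lam by linarith
  qed
  have ev: "x ^ (2*K) = \<bar>x\<bar> ^ (2*K)" for x :: real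
    by (metis power2_abs power_mult)
  have "{..<n} = insert 0 {1..<n}" using n by auto
  then have "(\<Sum>i<n. (as!i) ^ (2*K)) = (as!0) ^ (2*K) + (\<Sum>i\<in>{1..<n}. (as!i) ^ (2*K))"
    by simp
  also have "(as!0) ^ (2*K) \<le> real d ^ (2*K)"
    unfolding ev[of "as!0"] using eig_bound[OF sg rg sp, of 0] n by (intro power_mono) auto
  also have "(\<Sum>i\<in>{1..<n}. (as!i) ^ (2*K)) \<le> (\<Sum>i\<in>{1..<n}. lam ^ (2*K))"
  proof (intro sum_mono)
    fix i assume "i \<in> {1..<n}"
    then show "(as!i) ^ (2*K) \<le> lam ^ (2*K)" unfolding ev[of "as!i"] using b by (intro power_mono) auto
  qed
  also have "\<dots> = real (n - 1) * lam ^ (2*K)" by simp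
  finally show ?thesis by simp
qed

lemma frob_bound:
  assumes sg: "simple_graph n E" and rg: "regular n E d" and sp: "adj_spectrum n E as"
    and lam: "lam = max \<bar>as ! 1\<bar> \<bar>as ! (n - 1)\<bar>" and n: "n \<ge> 2"
    and y0: "(\<Sum>k<n. y k) = 0"
  shows "N2 n (mv n (adj_mat n E ^\<^sub>m K) y) \<le> real n * lam ^ (2*K) * N2 n y"
proof -
  let ?P = "adj_mat n E ^\<^sub>m K"
  define c where "c = real d ^ K / real n"
  have npos: "real n > 0" using n by simp
  have row: "\<And>i. i < n \<Longrightarrow> (\<Sum>k<n. ?P $$ (i,k)) = real d ^ K" by (rule pow_rowsum[OF rg])
  have e1: "mv n ?P y i = (\<Sum>k<n. (?P $$ (i,k) - c) * y k)" for i
  proof -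
    have "(\<Sum>k<n. (?P $$ (i,k) - c) * y k) = (\<Sum>k<n. ?P $$ (i,k) * y k) - c * (\<Sum>k<n. y k)"
      by (simp add: algebra_simps sum_subtractf sum_distrib_left)
    then show ?thesis unfolding mv_def using y0 by simp
  qed
  have "N2 n (mv n ?P y) \<le> (\<Sum>i<n. (\<Sum>k<n. (?P $$ (i,k) - c)\<^sup>2) * N2 n y)"
    unfolding N2_def e1 by (intro sum_mono cs_sum)
  also have "\<dots> = (\<Sum>i<n. \<Sum>k<n. (?P $$ (i,k) - c)\<^sup>2) * N2 n y"
    by (simp add: sum_distrib_right)
  also have "(\<Sum>i<n. \<Sum>k<n. (?P $$ (i,k) - c)\<^sup>2) = (\<Sum>i<n. (\<Sum>k<n. (?P $$ (i,k))\<^sup>2) - real d ^ (2*K) / real n)"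
  proof (intro sum.cong refl)
    fix i assume i: "i \<in> {..<n}"
    have "(\<Sum>k<n. (?P $$ (i,k) - c)\<^sup>2) = (\<Sum>k<n. (?P $$ (i,k))\<^sup>2 - 2 * c * ?P $$ (i,k) + c\<^sup>2)"
      by (intro sum.cong refl) (simp add: power2_diff)
    also have "\<dots> = (\<Sum>k<n. (?P $$ (i,k))\<^sup>2) - 2 * c * (\<Sum>k<n. ?P $$ (i,k)) + real n * c\<^sup>2"
      by (simp add: sum.distrib sum_subtractf sum_distrib_left)
    also have "\<dots> = (\<Sum>k<n. (?P $$ (i,k))\<^sup>2) - real d ^ (2*K) / real n"
    proof -
      have r: "(\<Sum>k<n. ?P $$ (i,k)) = real d ^ K" using row[of i] i by simp
      have "real d ^ (2*K) = real d ^ K * real d ^ K" by (simp add: mult_2 power_add)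
      then show ?thesis unfolding r c_def using npos by (simp add: power2_eq_square field_simps)
    qed
    finally show "(\<Sum>k<n. (?P $$ (i,k) - c)\<^sup>2) = (\<Sum>k<n. (?P $$ (i,k))\<^sup>2) - real d ^ (2*K) / real n" .
  qed
  also have "\<dots> = tr n (adj_mat n E ^\<^sub>m (2*K)) - real d ^ (2*K)"
    unfolding tr_def trace_sq[OF sg] using npos by (simp add: sum_subtractf)
  also have "\<dots> = (\<Sum>i<n. (as!i) ^ (2*K)) - real d ^ (2*K)"
    by (simp add: trace_pow_spec[OF sp])
  finally have "N2 n (mv n ?P y) \<le> ((\<Sum>i<n. (as!i) ^ (2*K)) - real d ^ (2*K)) * N2 n y" .
  also have "\<dots> \<le> (real (n - 1) * lam ^ (2*K)) * N2 n y"
    using spec_sum_bound[OF sg rg sp lam n, of K] N2_nonneg[of n y]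
    by (intro mult_right_mono) auto
  also have "\<dots> \<le> real n * lam ^ (2*K) * N2 n y"
  proof -
    have "lam ^ (2*K) \<ge> 0" by (simp add: power_mult)
    then show ?thesis using N2_nonneg[of n y] by (intro mult_right_mono) auto
  qed
  finally show ?thesis .
qed

lemma chain:
  assumes sg: "simple_graph n E"
  shows "N2 n (mv n (adj_mat n E) y) ^ (2^j) \<le> N2 n (mv n (adj_mat n E ^\<^sub>m (2^j)) y) * N2 n y ^ (2^j - 1)"
proof (induction j)
  case 0
  have "adj_mat n E ^\<^sub>m 1 = adj_mat n E" using A_carrier[of n E] by (rule pow_mat_one)
  then show ?case by simp
next
  case (Suc j)
  let ?A = "adj_mat n E"
  define K where "K = (2::nat)^j"
  let ?P = "?A ^\<^sub>m K"
  have C: "?A \<in> carrier_mat n n" "?P \<in> carrier_mat n n" using A_carrier by auto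
  have K1: "K \<ge> 1" unfolding K_def by simp
  have PP: "?P * ?P = ?A ^\<^sub>m (2*K)" using pow_mat_add[OF C(1), of K K] by (simp add: mult_2)
  have "N2 n (mv n ?P y) = ip n (mv n ?P y) (mv n ?P y)" unfolding N2_def ip_def by (simp add: power2_eq_square)
  also have "\<dots> = ip n y (mv n ?P (mv n ?P y))"
    using ip_sym[of n ?P y "mv n ?P y"] pow_sym[OF sg] by simp
  also have "\<dots> = ip n y (mv n (?A ^\<^sub>m (2*K)) y)"
    unfolding ip_def PP[symmetric] using mv_mult[OF C(2) C(2)] by simp
  finally have e: "N2 n (mv n ?P y) = ip n y (mv n (?A ^\<^sub>m (2*K)) y)" .
  have sq: "(N2 n (mv n ?P y))\<^sup>2 \<le> N2 n y * N2 n (mv n (?A ^\<^sub>m (2*K)) y)"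
    unfolding e by (rule ip_cs)
  let ?a = "N2 n (mv n ?A y)" and ?b = "N2 n (mv n ?P y)" and ?c = "N2 n y"
    and ?d = "N2 n (mv n (?A ^\<^sub>m (2*K)) y)"
  have IH: "?a ^ K \<le> ?b * ?c ^ (K - 1)" using Suc.IH unfolding K_def .
  have "?a ^ (2^Suc j) = (?a ^ K)\<^sup>2" unfolding K_def by (simp add: power_mult[symmetric] mult.commute)
  also have "\<dots> \<le> (?b * ?c ^ (K - 1))\<^sup>2"
    using IH N2_nonneg by (intro power_mono) auto
  also have "\<dots> = ?b\<^sup>2 * ?c ^ (2*K - 2)"
  proof -
    have "(?c ^ (K - 1))\<^sup>2 = ?c ^ ((K - 1) * 2)" by (simp add: power_mult)
    also have "(K - 1) * 2 = 2*K - 2" by simp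
    finally show ?thesis by (simp add: power_mult_distrib)
  qed
  also have "\<dots> \<le> (?c * ?d) * ?c ^ (2*K - 2)"
    using sq N2_nonneg by (intro mult_right_mono) auto
  also have "\<dots> = ?d * ?c ^ (2*K - 1)"
  proof -
    have "2*K - 1 = Suc (2*K - 2)" using K1 by simp
    then show ?thesis by (simp add: mult.commute mult.left_commute)
  qed
  finally show ?case unfolding K_def by (simp add: mult.commute)
qed

lemma op_bound:
  assumes sg: "simple_graph n E" and rg: "regular n E d" and sp: "adj_spectrum n E as"
    and lam: "lam = max \<bar>as ! 1\<bar> \<bar>as ! (n - 1)\<bar>" and n: "n \<ge> 2"
    and y0: "(\<Sum>k<n. y k) = 0"
  shows "N2 n (mv n (adj_mat n E) y) \<le> lam\<^sup>2 * N2 n y"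
proof (rule ccontr)
  let ?a = "N2 n (mv n (adj_mat n E) y)" and ?b = "lam\<^sup>2 * N2 n y"
  assume "\<not> ?a \<le> ?b"
  then have ab: "?a > ?b" by simp
  have b0: "?b \<ge> 0" using N2_nonneg by simp
  have key: "?a ^ (2^j) \<le> real n * ?b ^ (2^j)" for j
  proof -
    have "?a ^ (2^j) \<le> N2 n (mv n (adj_mat n E ^\<^sub>m (2^j)) y) * N2 n y ^ (2^j - 1)"
      by (rule chain[OF sg])
    also have "\<dots> \<le> (real n * lam ^ (2 * 2^j) * N2 n y) * N2 n y ^ (2^j - 1)"
      using frob_bound[OF sg rg sp lam n y0] N2_nonneg by (intro mult_right_mono) auto
    also have "\<dots> = real n * ?b ^ (2^j)"
    proof -
      have "(2::nat)^j = Suc (2^j - 1)" by simp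
      then have "N2 n y * N2 n y ^ (2^j - 1) = N2 n y ^ (2^j)" by (metis power_Suc)
      moreover have "lam ^ (2 * 2^j) = (lam\<^sup>2) ^ (2^j)" by (simp add: power_mult)
      ultimately show ?thesis by (simp add: power_mult_distrib mult.assoc)
    qed
    finally show ?thesis .
  qed
  show False
  proof (cases "?b = 0")
    case True
    have k0: "?a \<le> real n * ?b" using key[of 0] by simp
    then have "?a \<le> 0" unfolding True by simp
    then show False using ab True by linarith
  next
    case False
    then have bp: "?b > 0" using b0 by linarith
    define x where "x = ?a / ?b - 1"
    have xp: "x > 0" using ab bp unfolding x_def by (simp add: field_simps)
    obtain N where N: "real n / x < real N" using reals_Archimedean2 by blast
    have "1 + real (2^N) * x \<le> (1 + x) ^ (2^N)"
      using xp by (intro Bernoulli_inequality) simp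
    also have "(1 + x) ^ (2^N) = ?a ^ (2^N) / ?b ^ (2^N)"
      unfolding x_def by (simp add: power_divide)
    also have "\<dots> \<le> real n"
      using key[of N] bp by (simp add: divide_le_eq)
    finally have "real (2^N) * x < real n" by simp
    moreover have "real N \<le> real (2^N)" by (simp add: less_exp less_imp_le)
    moreover have "real n < real N * x" using N xp by (simp add: divide_less_eq)
    ultimately show False using xp by (smt (verit) mult_right_mono)
  qed
qed

lemma sum_restr:
  fixes n :: nat
  assumes "R \<subseteq> {..<n}"
  shows "(\<Sum>k<n. (if k \<in> R then f k else 0)) = (\<Sum>k\<in>R. (f k :: real))"
proof -
  have "{..<n} \<inter> R = R" using assms by auto
  moreover have "sum f ({..<n} \<inter> R) = (\<Sum>k<n. (if k \<in> R then f k else 0))"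
    by (rule sum.inter_restrict) (rule finite_lessThan)
  ultimately show ?thesis by simp
qed

definition eBR :: "(nat \<Rightarrow> nat \<Rightarrow> bool) \<Rightarrow> nat set \<Rightarrow> nat set \<Rightarrow> real" where
  "eBR E B R = (\<Sum>b\<in>B. real (card {r \<in> R. E b r}))"

lemma mixing:
  assumes G: "ndl_graph n d lam E" and n: "n \<ge> 2" and B: "B \<subseteq> {..<n}" and R: "R \<subseteq> {..<n}"
  shows "\<bar>eBR E B R - real d / real n * real (card B) * real (card R)\<bar> \<le> lam * sqrt (real (card B) * real (card R))"
proof -
  obtain as where sg: "simple_graph n E" and rg: "regular n E d" and sp: "adj_spectrum n E as"
    and lam: "lam = max \<bar>as ! 1\<bar> \<bar>as ! (n - 1)\<bar>" using G unfolding ndl_graph_def by auto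
  have lam0: "lam \<ge> 0" unfolding lam by simp
  have finR: "finite R" and finB: "finite B" using R B finite_subset by auto
  let ?A = "adj_mat n E"
  have npos: "real n > 0" using n by simp
  define c where "c = real (card R) / real n"
  define y where "y = (\<lambda>k. (if k \<in> R then 1 else 0) - c)"
  define x where "x = (\<lambda>k. if k \<in> B then (1::real) else 0)"
  have sR: "(\<Sum>k<n. (if k \<in> R then 1 else 0)) = real (card R)"
    using sum_restr[OF R, of "\<lambda>_. 1"] by simp
  have y0: "(\<Sum>k<n. y k) = 0"
    unfolding y_def c_def using npos by (simp add: sum_subtractf sR)
  have N2y: "N2 n y \<le> real (card R)"
  proof -
    have "N2 n y = (\<Sum>k<n. (if k \<in> R then 1 else 0) - 2 * c * (if k \<in> R then 1 else 0) + c\<^sup>2)"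
      unfolding N2_def y_def by (intro sum.cong refl) (auto simp: power2_eq_square algebra_simps)
    also have "\<dots> = real (card R) - 2 * c * real (card R) + real n * c\<^sup>2"
      by (simp add: sum.distrib sum_subtractf sum_distrib_left[symmetric] sR)
    also have "\<dots> = real (card R) - real (card R) * c"
      unfolding c_def using npos by (simp add: power2_eq_square field_simps)
    also have "\<dots> \<le> real (card R)" unfolding c_def by simp
    finally show ?thesis .
  qed
  have N2x: "N2 n x = real (card B)"
  proof -
    have "N2 n x = (\<Sum>k<n. (if k \<in> B then 1 else 0))"
      unfolding N2_def x_def by (intro sum.cong refl) auto
    then show ?thesis using sum_restr[OF B, of "\<lambda>_. 1"] by simp
  qed
  have row: "mv n ?A y i = real (card {r \<in> R. E i r}) - c * real d" if i: "i < n" for i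
  proof -
    have "mv n ?A y i = (\<Sum>k<n. (if k \<in> R then ?A $$ (i,k) else 0)) - c * (\<Sum>k<n. ?A $$ (i,k))"
    proof -
      have "mv n ?A y i = (\<Sum>k<n. (if k \<in> R then ?A $$ (i,k) else 0) - c * ?A $$ (i,k))"
        unfolding mv_def y_def by (intro sum.cong refl) (auto simp: algebra_simps)
      then show ?thesis by (simp add: sum_subtractf sum_distrib_left)
    qed
    also have "(\<Sum>k<n. (if k \<in> R then ?A $$ (i,k) else 0)) = (\<Sum>k\<in>R. ?A $$ (i,k))"
      by (rule sum_restr[OF R])
    also have "\<dots> = (\<Sum>k\<in>R. if E i k then 1 else 0)"
      using R i by (intro sum.cong refl) (auto simp: A_entry)
    also have "\<dots> = real (card {r \<in> R. E i r})"
    proof -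
      show ?thesis using sum.inter_filter[OF finR, of "\<lambda>_. (1::real)" "E i"] by simp
    qed
    finally show ?thesis using A_rowsum[OF rg i] by simp
  qed
  have ipv: "ip n x (mv n ?A y) = eBR E B R - real d / real n * real (card B) * real (card R)"
  proof -
    have "ip n x (mv n ?A y) = (\<Sum>i<n. if i \<in> B then mv n ?A y i else 0)"
      unfolding ip_def x_def by (intro sum.cong refl) auto
    also have "\<dots> = (\<Sum>i\<in>B. mv n ?A y i)" by (rule sum_restr[OF B])
    also have "\<dots> = (\<Sum>i\<in>B. real (card {r \<in> R. E i r}) - c * real d)"
      using B row by (intro sum.cong refl) auto
    also have "\<dots> = eBR E B R - real d / real n * real (card B) * real (card R)"
      unfolding eBR_def c_def by (simp add: sum_subtractf)
    finally show ?thesis .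
  qed
  have "(ip n x (mv n ?A y))\<^sup>2 \<le> N2 n x * N2 n (mv n ?A y)" by (rule ip_cs)
  also have "\<dots> \<le> real (card B) * (lam\<^sup>2 * N2 n y)"
    unfolding N2x using op_bound[OF sg rg sp lam n y0] by (intro mult_left_mono) auto
  also have "\<dots> \<le> real (card B) * (lam\<^sup>2 * real (card R))"
    using N2y by (intro mult_left_mono) auto
  also have "\<dots> = (lam * sqrt (real (card B) * real (card R)))\<^sup>2"
    by (simp add: power_mult_distrib)
  finally have "(ip n x (mv n ?A y))\<^sup>2 \<le> (lam * sqrt (real (card B) * real (card R)))\<^sup>2" .
  then have "\<bar>ip n x (mv n ?A y)\<bar>\<^sup>2 \<le> (lam * sqrt (real (card B) * real (card R)))\<^sup>2" by simp
  then have "\<bar>ip n x (mv n ?A y)\<bar> \<le> lam * sqrt (real (card B) * real (card R))"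
    by (rule power2_le_imp_le) (use lam0 in simp)
  then show ?thesis unfolding ipv .
qed


definition indeps :: "(nat \<Rightarrow> nat \<Rightarrow> bool) \<Rightarrow> nat set \<Rightarrow> nat \<Rightarrow> nat set set" where
  "indeps E R j = {I. I \<subseteq> R \<and> card I = j \<and> (\<forall>x\<in>I. \<forall>y\<in>I. x \<noteq> y \<longrightarrow> \<not> E x y)}"

definition nbr :: "(nat \<Rightarrow> nat \<Rightarrow> bool) \<Rightarrow> nat set \<Rightarrow> nat \<Rightarrow> nat set" where
  "nbr E R v = {u \<in> R. u \<noteq> v \<and> \<not> E v u}"

lemma finite_indeps: "finite R \<Longrightarrow> finite (indeps E R j)"
  unfolding indeps_def by (rule finite_subset[of _ "Pow R"]) auto

lemma indeps_rec:
  assumes fin: "finite R"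
  shows "real (Suc j) * real (card (indeps E R (Suc j))) \<le> (\<Sum>v\<in>R. real (card (indeps E (nbr E R v) j)))"
proof -
  let ?F = "indeps E R (Suc j)"
  have finF: "finite ?F" using finite_indeps[OF fin] .
  have "real (Suc j) * real (card ?F) = (\<Sum>I\<in>?F. real (card I))"
    unfolding indeps_def by simp
  also have "\<dots> = (\<Sum>I\<in>?F. \<Sum>v\<in>R. if v \<in> I then 1 else (0::real))"
  proof (intro sum.cong refl)
    fix I assume I: "I \<in> ?F"
    then have "I \<subseteq> R" unfolding indeps_def by auto
    then have "R \<inter> I = I" by auto
    then show "real (card I) = (\<Sum>v\<in>R. if v \<in> I then 1 else (0::real))"
      using sum.inter_restrict[OF fin, of "\<lambda>_. (1::real)" I] by simp
  qed
  also have "\<dots> = (\<Sum>v\<in>R. \<Sum>I\<in>?F. if v \<in> I then 1 else (0::real))"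
    by (rule sum.swap)
  also have "\<dots> = (\<Sum>v\<in>R. real (card {I \<in> ?F. v \<in> I}))"
    using sum.inter_filter[OF finF, of "\<lambda>_. (1::real)"] by simp
  also have "\<dots> \<le> (\<Sum>v\<in>R. real (card (indeps E (nbr E R v) j)))"
  proof (intro sum_mono)
    fix v assume v: "v \<in> R"
    have "card {I \<in> ?F. v \<in> I} \<le> card (indeps E (nbr E R v) j)"
    proof (rule card_inj_on_le[of "\<lambda>I. I - {v}"])
      show "inj_on (\<lambda>I. I - {v}) {I \<in> ?F. v \<in> I}"
        by (rule inj_onI) blast
      show "(\<lambda>I. I - {v}) ` {I \<in> ?F. v \<in> I} \<subseteq> indeps E (nbr E R v) j"
      proof
        fix J assume "J \<in> (\<lambda>I. I - {v}) ` {I \<in> ?F. v \<in> I}"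
        then obtain I where I: "I \<in> ?F" "v \<in> I" "J = I - {v}" by auto
        have fI: "finite I" using I(1) fin unfolding indeps_def by (auto intro: finite_subset)
        show "J \<in> indeps E (nbr E R v) j"
          using I fI unfolding indeps_def nbr_def by auto
      qed
      show "finite (indeps E (nbr E R v) j)"
        by (rule finite_indeps) (use fin in \<open>auto simp: nbr_def\<close>)
    qed
    then show "real (card {I \<in> ?F. v \<in> I}) \<le> real (card (indeps E (nbr E R v) j))" by simp
  qed
  finally show ?thesis .
qed

definition hh :: "real \<Rightarrow> real \<Rightarrow> real \<Rightarrow> real" where
  "hh r0 g x = (if x < r0 then 0 else 1 + ln (x / r0) / g)"

lemma hh_nonneg: "r0 > 0 \<Longrightarrow> g > 0 \<Longrightarrow> hh r0 g x \<ge> 0"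
  unfolding hh_def by auto

lemma hh_mono:
  assumes "r0 > 0" "g > 0" "x \<le> y"
  shows "hh r0 g x \<le> hh r0 g y"
proof (cases "x < r0")
  case True
  then show ?thesis using hh_nonneg[OF assms(1,2)] unfolding hh_def by auto
next
  case False
  then have "ln (x / r0) \<le> ln (y / r0)" using assms by (simp add: divide_right_mono)
  then show ?thesis using False assms unfolding hh_def by (auto simp: divide_right_mono)
qed

lemma hh_drop:
  assumes r0: "r0 > 0" and q: "0 < q" "q < 1" and g: "g = - ln q" and y: "y \<ge> r0" and x: "x \<le> y * q"
  shows "hh r0 g x \<le> hh r0 g y - 1"
proof -
  have gp: "g > 0" using q g by simp
  have hy: "hh r0 g y = 1 + ln (y / r0) / g" using y unfolding hh_def by simp
  show ?thesis
  proof (cases "x < r0")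
    case True
    then show ?thesis using hy y r0 gp unfolding hh_def by auto
  next
    case False
    then have xp: "x > 0" using r0 by simp
    have "ln (x / r0) \<le> ln (y * q / r0)" using x xp r0 by (simp add: divide_right_mono)
    also have "\<dots> = ln (y / r0) + ln q" using q y r0 by (simp add: ln_mult ln_div)
    finally have A: "ln (x / r0) \<le> ln (y / r0) - g" using g by simp
    have "ln (x / r0) / g \<le> (ln (y / r0) - g) / g" using A gp by (intro divide_right_mono) auto
    also have "\<dots> = ln (y / r0) / g - 1" using gp by (simp add: field_simps)
    finally show ?thesis using False hy unfolding hh_def by simp
  qed
qed

lemma count_main:
  fixes E :: "nat \<Rightarrow> nat \<Rightarrow> bool" and n :: nat and D r0 :: real
  assumes D: "0 < D" "D < 2" and r0: "1 \<le> r0" "r0 \<le> real n"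
    and bad: "\<And>R. R \<subseteq> {..<n} \<Longrightarrow>
       real (card {v \<in> R. real (card {u \<in> R. E v u}) < D * real (card R) / 2}) * real (card R) \<le> r0\<^sup>2"
  shows "R \<subseteq> {..<n} \<Longrightarrow> fact j * real (card (indeps E R j))
     \<le> (2*r0)^j * (real n / r0) powr hh r0 (- ln (1 - D/2)) (real (card R))"
proof (induction j arbitrary: R)
  define g where "g = - ln (1 - D/2)"
  define P where "P = real n / r0"
  have gp: "g > 0" unfolding g_def using D by simp
  have r0p: "r0 > 0" using r0 by simp
  have P1: "P \<ge> 1" unfolding P_def using r0 by simp
  case 0
  have finR: "finite R" using 0 finite_subset by blast
  have "indeps E R 0 = {{}}" unfolding indeps_def using finR rev_finite_subset by (fastforce simp: card_eq_0_iff)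
  then show ?case using ge_one_powr_ge_zero[OF P1 hh_nonneg[OF r0p gp]] unfolding P_def g_def by simp
next
  define g where "g = - ln (1 - D/2)"
  define P where "P = real n / r0"
  have gp: "g > 0" unfolding g_def using D by simp
  have r0p: "r0 > 0" using r0 by simp
  have P1: "P \<ge> 1" unfolding P_def using r0 by simp
  case (Suc j)
  let ?r = "real (card R)"
  let ?X = "(2*r0)^j"
  let ?h = "hh r0 g"
  have finR: "finite R" using Suc.prems finite_subset by blast
  have Xp: "?X \<ge> 0" using r0 by simp
  have sub: "nbr E R v \<subseteq> R" for v unfolding nbr_def by auto
  have tm: "fact j * real (card (indeps E (nbr E R v) j)) \<le> ?X * P powr ?h (real (card (nbr E R v)))" for v
    using Suc.IH[of "nbr E R v"] sub[of v] Suc.prems unfolding P_def g_def by blast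
  have "fact (Suc j) * real (card (indeps E R (Suc j))) = fact j * (real (Suc j) * real (card (indeps E R (Suc j))))"
    by (simp add: algebra_simps)
  also have "\<dots> \<le> fact j * (\<Sum>v\<in>R. real (card (indeps E (nbr E R v) j)))"
    by (intro mult_left_mono indeps_rec[OF finR]) simp
  also have "\<dots> = (\<Sum>v\<in>R. fact j * real (card (indeps E (nbr E R v) j)))"
    by (simp add: sum_distrib_left)
  also have "\<dots> \<le> (\<Sum>v\<in>R. ?X * P powr ?h (real (card (nbr E R v))))"
    by (intro sum_mono tm)
  finally have step: "fact (Suc j) * real (card (indeps E R (Suc j))) \<le> (\<Sum>v\<in>R. ?X * P powr ?h (real (card (nbr E R v))))" .
  have cardsub: "real (card (nbr E R v)) \<le> ?r" for v
    using card_mono[OF finR sub[of v]] by simp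
  show ?case
  proof (cases "?r < r0")
    case True
    have "(\<Sum>v\<in>R. ?X * P powr ?h (real (card (nbr E R v)))) = (\<Sum>v\<in>R. ?X)"
    proof (intro sum.cong refl)
      fix v
      have "?h (real (card (nbr E R v))) = 0" using cardsub[of v] True unfolding hh_def by simp
      then show "?X * P powr ?h (real (card (nbr E R v))) = ?X" using P1 by simp
    qed
    also have "\<dots> = ?r * ?X" by simp
    also have "\<dots> \<le> (2*r0) * ?X" using True Xp r0 by (intro mult_right_mono) auto
    also have "\<dots> = (2*r0)^(Suc j) * P powr ?h ?r" using True P1 unfolding hh_def by simp
    finally show ?thesis using step unfolding P_def g_def by simp
  next
    case False
    let ?Bad = "{v \<in> R. real (card {u \<in> R. E v u}) < D * ?r / 2}"
    let ?Good = "R - ?Bad"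
    have rp: "?r > 0" using False r0 by simp
    have PH: "P powr ?h ?r \<ge> 0" by simp
    have finB: "finite ?Bad" using finR by simp
    have cB: "real (card ?Bad) \<le> r0"
    proof -
      have "real (card ?Bad) * ?r \<le> r0 * r0" using bad[OF Suc.prems] by (simp add: power2_eq_square)
      also have "\<dots> \<le> r0 * ?r" using False r0p by (intro mult_left_mono) auto
      finally show ?thesis using rp by simp
    qed
    have cG: "real (card ?Good) \<le> real n"
    proof -
      have "card ?Good \<le> card R" using finR by (intro card_mono) auto
      also have "card R \<le> n" using Suc.prems card_mono[of "{..<n}" R] by simp
      finally show ?thesis by simp
    qed
    have splt: "(\<Sum>v\<in>R. ?X * P powr ?h (real (card (nbr E R v))))
        = (\<Sum>v\<in>?Bad. ?X * P powr ?h (real (card (nbr E R v)))) + (\<Sum>v\<in>?Good. ?X * P powr ?h (real (card (nbr E R v))))"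
      using sum.subset_diff[of ?Bad R] finR by (simp add: add.commute)
    have sB: "(\<Sum>v\<in>?Bad. ?X * P powr ?h (real (card (nbr E R v)))) \<le> (\<Sum>v\<in>?Bad. ?X * P powr ?h ?r)"
    proof (intro sum_mono mult_left_mono Xp)
      fix v assume "v \<in> ?Bad"
      show "P powr ?h (real (card (nbr E R v))) \<le> P powr ?h ?r"
        using P1 hh_mono[OF r0p gp cardsub[of v]] by (intro powr_mono) auto
    qed
    have sG: "(\<Sum>v\<in>?Good. ?X * P powr ?h (real (card (nbr E R v)))) \<le> (\<Sum>v\<in>?Good. ?X * P powr (?h ?r - 1))"
    proof (intro sum_mono mult_left_mono Xp)
      fix v assume v: "v \<in> ?Good"
      then have deg: "real (card {u \<in> R. E v u}) \<ge> D * ?r / 2" by auto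
      have "nbr E R v \<subseteq> R - {u \<in> R. E v u}" unfolding nbr_def by auto
      then have "card (nbr E R v) \<le> card (R - {u \<in> R. E v u})" using finR by (intro card_mono) auto
      also have "\<dots> = card R - card {u \<in> R. E v u}" using finR by (intro card_Diff_subset) auto
      finally have "real (card (nbr E R v)) \<le> ?r - real (card {u \<in> R. E v u})"
        using card_mono[OF finR, of "{u \<in> R. E v u}"] by auto
      also have "\<dots> \<le> ?r * (1 - D/2)" using deg by (simp add: algebra_simps)
      finally have "?h (real (card (nbr E R v))) \<le> ?h ?r - 1"
        using D False unfolding g_def by (intro hh_drop[OF r0p]) auto
      then show "P powr ?h (real (card (nbr E R v))) \<le> P powr (?h ?r - 1)"
        using P1 by (intro powr_mono) auto
    qed
    have "(\<Sum>v\<in>?Bad. ?X * P powr ?h ?r) = real (card ?Bad) * (?X * P powr ?h ?r)" by simp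
    also have "\<dots> \<le> r0 * (?X * P powr ?h ?r)" using cB Xp PH by (intro mult_right_mono) auto
    finally have sB2: "(\<Sum>v\<in>?Bad. ?X * P powr ?h ?r) \<le> r0 * (?X * P powr ?h ?r)" .
    have "(\<Sum>v\<in>?Good. ?X * P powr (?h ?r - 1)) = real (card ?Good) * (?X * (P powr ?h ?r / P))"
      using P1 by (simp add: powr_diff)
    also have "\<dots> \<le> real n * (?X * (P powr ?h ?r / P))" using cG Xp PH P1 by (intro mult_right_mono) auto
    also have "\<dots> = r0 * (?X * P powr ?h ?r)" unfolding P_def using r0p r0 by (simp add: field_simps)
    finally have sG2: "(\<Sum>v\<in>?Good. ?X * P powr (?h ?r - 1)) \<le> r0 * (?X * P powr ?h ?r)" .
    have "fact (Suc j) * real (card (indeps E R (Suc j))) \<le> 2 * r0 * (?X * P powr ?h ?r)"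
      using step splt sB sG sB2 sG2 by linarith
    also have "\<dots> = (2*r0)^(Suc j) * P powr ?h ?r" by simp
    finally show ?thesis unfolding P_def g_def .
  qed
qed


lemma choose_ratio:
  assumes "m \<le> n"
  shows "real (m choose t) * real n ^ t \<le> real (n choose t) * real m ^ t"
proof (cases "t \<le> m")
  case False
  then show ?thesis by (simp add: binomial_eq_0)
next
  case True
  have tn: "t \<le> n" using True assms by simp
  have "real (m choose t) * real n ^ t = (\<Prod>i = 0..<t. real (m - i) / real (t - i)) * (\<Prod>i = 0..<t. real n)"
    using binomial_altdef_of_nat[OF True, where 'a=real] by simp
  also have "\<dots> = (\<Prod>i = 0..<t. real (m - i) / real (t - i) * real n)"
    by (rule prod.distrib[symmetric])
  also have "\<dots> \<le> (\<Prod>i = 0..<t. real (n - i) / real (t - i) * real m)"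
  proof (intro prod_mono conjI)
    fix i assume i: "i \<in> {0..<t}"
    show "0 \<le> real (m - i) / real (t - i) * real n" by simp
    have "real (m - i) * real n \<le> real (n - i) * real m"
      using i True assms by (simp add: of_nat_diff algebra_simps mult_left_mono)
    then show "real (m - i) / real (t - i) * real n \<le> real (n - i) / real (t - i) * real m"
      using i by (simp add: divide_right_mono mult.commute[of "_ / _"] times_divide_eq_left)
  qed
  also have "\<dots> = (\<Prod>i = 0..<t. real (n - i) / real (t - i)) * (\<Prod>i = 0..<t. real m)"
    by (rule prod.distrib)
  also have "\<dots> = real (n choose t) * real m ^ t"
    by (simp only: binomial_altdef_of_nat[OF tn] prod_constant card_atLeastLessThan diff_zero)
  finally show ?thesis .
qed

lemma fact_lower: "(real t / exp 1) ^ t \<le> fact t"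
proof (induction t)
  case 0
  then show ?case by simp
next
  case (Suc t)
  show ?case
  proof (cases "t = 0")
    case True
    then show ?thesis using exp_gt_one[of 1] by simp
  next
    case False
    then have tp: "real t > 0" by simp
    have "(1 + 1 / real t) ^ t \<le> exp (1 / real t) ^ t"
      using exp_ge_add_one_self[of "1 / real t"] tp by (intro power_mono) auto
    also have "\<dots> = exp 1" using tp by (simp add: exp_of_nat_mult[symmetric])
    finally have b: "(1 + 1 / real t) ^ t \<le> exp 1" .
    have q: "real (Suc t) / exp 1 = (real t / exp 1) * (1 + 1 / real t)" using tp by (simp add: field_simps)
    have "(real (Suc t) / exp 1) ^ Suc t = real (Suc t) / exp 1 * (real (Suc t) / exp 1) ^ t"
      by (rule power_Suc)
    also have "(real (Suc t) / exp 1) ^ t = (real t / exp 1) ^ t * (1 + 1 / real t) ^ t"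
      by (subst q) (rule power_mult_distrib)
    finally have "(real (Suc t) / exp 1) ^ Suc t = real (Suc t) / exp 1 * ((real t / exp 1) ^ t * (1 + 1 / real t) ^ t)" .
    also have "\<dots> \<le> real (Suc t) / exp 1 * (fact t * exp 1)"
      using Suc.IH b by (intro mult_left_mono mult_mono) auto
    also have "\<dots> = fact (Suc t)" by simp
    finally show ?thesis .
  qed
qed


lemma exists_below_avg:
  fixes f :: "'a \<Rightarrow> real"
  assumes "finite S" "S \<noteq> {}"
  shows "\<exists>x\<in>S. f x * real (card S) \<le> sum f S"
proof (rule ccontr)
  assume "\<not> ?thesis"
  then have lt: "\<And>x. x \<in> S \<Longrightarrow> sum f S < f x * real (card S)" by (simp add: not_le)
  have "(\<Sum>x\<in>S. sum f S) < (\<Sum>x\<in>S. f x * real (card S))"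
    using assms lt by (intro sum_strict_mono) auto
  then show False by (simp add: sum_distrib_right[symmetric] mult.commute)
qed

lemma card_supersets:
  assumes V: "finite V" and I: "I \<subseteq> V" "card I = t" and tm: "t \<le> m"
  shows "card {X. X \<subseteq> V \<and> card X = m \<and> I \<subseteq> X} = (card V - t) choose (m - t)"
proof -
  let ?T = "{Y. Y \<subseteq> V - I \<and> card Y = m - t}"
  have fI: "finite I" using I V finite_subset by blast
  have img: "(\<lambda>Y. Y \<union> I) ` ?T = {X. X \<subseteq> V \<and> card X = m \<and> I \<subseteq> X}"
  proof
    show "(\<lambda>Y. Y \<union> I) ` ?T \<subseteq> {X. X \<subseteq> V \<and> card X = m \<and> I \<subseteq> X}"
    proof
      fix X assume "X \<in> (\<lambda>Y. Y \<union> I) ` ?T"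
      then obtain Y where Y: "Y \<subseteq> V - I" "card Y = m - t" "X = Y \<union> I" by auto
      have fY: "finite Y" using Y V finite_subset by blast
      have "Y \<inter> I = {}" using Y by auto
      then have "card X = card Y + card I" unfolding Y(3) using fY fI by (rule card_Un_disjoint[rotated 2])
      then show "X \<in> {X. X \<subseteq> V \<and> card X = m \<and> I \<subseteq> X}" using Y I tm by auto
    qed
  next
    show "{X. X \<subseteq> V \<and> card X = m \<and> I \<subseteq> X} \<subseteq> (\<lambda>Y. Y \<union> I) ` ?T"
    proof
      fix X assume X: "X \<in> {X. X \<subseteq> V \<and> card X = m \<and> I \<subseteq> X}"
      have fX: "finite X" using X V finite_subset by blast
      have "card (X - I) = card X - card I" using X fI by (intro card_Diff_subset) auto
      then have "card (X - I) = m - t" using X I by simp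
      moreover have "X = (X - I) \<union> I" using X by auto
      ultimately show "X \<in> (\<lambda>Y. Y \<union> I) ` ?T" using X by (intro image_eqI[of _ _ "X - I"]) auto
    qed
  qed
  have inj: "inj_on (\<lambda>Y. Y \<union> I) ?T"
  proof (rule inj_onI)
    fix Y1 Y2 assume "Y1 \<in> ?T" "Y2 \<in> ?T" "Y1 \<union> I = Y2 \<union> I"
    then show "Y1 = Y2" by blast
  qed
  have "card {X. X \<subseteq> V \<and> card X = m \<and> I \<subseteq> X} = card ?T"
    unfolding img[symmetric] by (rule card_image[OF inj])
  also have "\<dots> = card (V - I) choose (m - t)" using V by (intro n_subsets) auto
  also have "card (V - I) = card V - t" using I fI by (simp add: card_Diff_subset)
  finally show ?thesis .
qed

lemma exists_good_subset:
  fixes V :: "'a set" and F :: "'a set set"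
  assumes V: "finite V" and F: "\<And>I. I \<in> F \<Longrightarrow> I \<subseteq> V \<and> card I = t" and m: "m \<le> card V"
  shows "\<exists>X. X \<subseteq> V \<and> card X = m \<and>
           real (card {I \<in> F. I \<subseteq> X}) * real (card V choose t) \<le> real (card F) * real (m choose t)"
proof -
  let ?n = "card V"
  let ?S = "{X. X \<subseteq> V \<and> card X = m}"
  have finS: "finite ?S" using V by simp
  have cS: "card ?S = ?n choose m" using V by (rule n_subsets)
  have cSp: "card ?S > 0" unfolding cS using m by simp
  then have neS: "?S \<noteq> {}" by (metis card.empty less_irrefl)
  have finF: "finite F"
    by (rule finite_subset[of _ "Pow V"]) (use F V in auto)
  show ?thesis
  proof (cases "t \<le> m")
    case False
    obtain X where X: "X \<in> ?S" using neS by blast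
    have "{I \<in> F. I \<subseteq> X} = {}"
    proof (rule ccontr)
      assume "{I \<in> F. I \<subseteq> X} \<noteq> {}"
      then obtain I where "I \<in> F" "I \<subseteq> X" by auto
      then have "card I \<le> card X" using X V by (intro card_mono) (auto intro: finite_subset)
      then show False using F[OF \<open>I \<in> F\<close>] X False by auto
    qed
    then have c0: "real (card {I \<in> F. I \<subseteq> X}) = 0" by (metis card.empty of_nat_0)
    have "X \<subseteq> V" "card X = m" using X by auto
    then show ?thesis using c0 by (intro exI[of _ X]) simp
  next
    case True
    let ?cnt = "\<lambda>X. real (card {I \<in> F. I \<subseteq> X})"
    have "(\<Sum>X\<in>?S. ?cnt X) = (\<Sum>X\<in>?S. \<Sum>I\<in>F. if I \<subseteq> X then 1 else (0::real))"
      using sum.inter_filter[OF finF, of "\<lambda>_. (1::real)"] by simp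
    also have "\<dots> = (\<Sum>I\<in>F. \<Sum>X\<in>?S. if I \<subseteq> X then 1 else (0::real))"
      by (rule sum.swap)
    also have "\<dots> = (\<Sum>I\<in>F. real (card {X \<in> ?S. I \<subseteq> X}))"
      using sum.inter_filter[OF finS, of "\<lambda>_. (1::real)"] by simp
    also have "\<dots> = (\<Sum>I\<in>F. real ((?n - t) choose (m - t)))"
    proof (intro sum.cong refl)
      fix I assume "I \<in> F"
      then have "card {X. X \<subseteq> V \<and> card X = m \<and> I \<subseteq> X} = (?n - t) choose (m - t)"
        using F V True by (intro card_supersets) auto
      moreover have "{X \<in> ?S. I \<subseteq> X} = {X. X \<subseteq> V \<and> card X = m \<and> I \<subseteq> X}" by auto
      ultimately show "real (card {X \<in> ?S. I \<subseteq> X}) = real ((?n - t) choose (m - t))" by simp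
    qed
    also have "\<dots> = real (card F) * real ((?n - t) choose (m - t))" by simp
    finally have tot: "(\<Sum>X\<in>?S. ?cnt X) = real (card F) * real ((?n - t) choose (m - t))" .
    obtain X where X: "X \<in> ?S" and avg: "?cnt X * real (card ?S) \<le> (\<Sum>X\<in>?S. ?cnt X)"
      using exists_below_avg[OF finS neS, of ?cnt] by blast
    have cm: "real (?n choose m) * real (m choose t) = real (?n choose t) * real ((?n - t) choose (m - t))"
      using choose_mult[OF True m] by (metis of_nat_mult)
    have pos: "real ((?n - t) choose (m - t)) > 0" using m True by simp
    have "?cnt X * real (?n choose t) * real ((?n - t) choose (m - t)) = ?cnt X * real (card ?S) * real (m choose t)"
      unfolding cS using cm by (simp add: mult.assoc)
    also have "\<dots> \<le> real (card F) * real ((?n - t) choose (m - t)) * real (m choose t)"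
      using avg tot by (intro mult_right_mono) auto
    finally have "?cnt X * real (?n choose t) * real ((?n - t) choose (m - t)) \<le>
        real (card F) * real (m choose t) * real ((?n - t) choose (m - t))" by (simp add: mult_ac)
    then have "?cnt X * real (?n choose t) \<le> real (card F) * real (m choose t)"
      using pos by simp
    then show ?thesis using X by auto
  qed
qed


definition RP :: "nat \<Rightarrow> nat \<Rightarrow> nat \<Rightarrow> bool" where
  "RP s t N \<longleftrightarrow> (\<forall>E. simple_graph N E \<longrightarrow> has_clique N E s \<or> has_indep N E t)"

lemma ramsey_eq: "ramsey s t = (LEAST N. RP s t N)"
  unfolding ramsey_def RP_def by simp

lemma RP_exists: "\<exists>N. RP s t N"
proof -
  obtain r where r: "\<forall>(V::nat set) (E::nat set set). finite V \<and> card V \<ge> r \<longrightarrow>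
    (\<exists>R \<subseteq> V. card R = s \<and> clique R E \<or> card R = t \<and> indep R E)"
    using ramsey2[where 'a=nat, of s t] by blast
  have "RP s t r" unfolding RP_def
  proof (intro allI impI)
    fix E assume sg: "simple_graph r E"
    let ?E = "{{u, v} | u v. E u v}"
    obtain R where R: "R \<subseteq> {0..<r}" "card R = s \<and> clique R ?E \<or> card R = t \<and> indep R ?E"
      using r[rule_format, of "{0..<r}" ?E] by auto
    show "has_clique r E s \<or> has_indep r E t"
      using R(2)
    proof
      assume a: "card R = s \<and> clique R ?E"
      have "\<forall>x\<in>R. \<forall>y\<in>R. x \<noteq> y \<longrightarrow> E x y"
      proof (intro ballI impI)
        fix x y assume xy: "x \<in> R" "y \<in> R" "x \<noteq> y"
        then have "{x, y} \<in> ?E" using a unfolding clique_def by auto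
        then obtain u v where uv: "{x, y} = {u, v}" "E u v" by blast
        then have "(x = u \<and> y = v) \<or> (x = v \<and> y = u)" using uv(1) by (simp add: doubleton_eq_iff)
        moreover have xr: "x < r" "y < r" using xy R(1) by auto
        moreover have sym: "E y x \<Longrightarrow> E x y" using sg xr unfolding simple_graph_def by blast
        ultimately show "E x y" using uv(2) by blast
      qed
      then show ?thesis unfolding has_clique_def using a R(1) by blast
    next
      assume a: "card R = t \<and> indep R ?E"
      have "\<forall>x\<in>R. \<forall>y\<in>R. x \<noteq> y \<longrightarrow> \<not> E x y"
      proof (intro ballI impI notI)
        fix x y assume xy: "x \<in> R" "y \<in> R" "x \<noteq> y" and e: "E x y"
        then have "{x, y} \<in> ?E" by blast
        then show False using a xy unfolding indep_def by auto
      qed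
      then show ?thesis unfolding has_indep_def using a R(1) by blast
    qed
  qed
  then show ?thesis by blast
qed

lemma RP_mono: "RP s t a \<Longrightarrow> a \<le> k \<Longrightarrow> RP s t k"
  unfolding RP_def
proof (intro allI impI)
  fix E assume P: "\<forall>E. simple_graph a E \<longrightarrow> has_clique a E s \<or> has_indep a E t"
    and ak: "a \<le> k" and sg: "simple_graph k E"
  have "simple_graph a E" using sg ak unfolding simple_graph_def by auto
  then have "has_clique a E s \<or> has_indep a E t" using P by blast
  moreover have sub: "{0..<a} \<subseteq> {0..<k}" using ak by auto
  ultimately show "has_clique k E s \<or> has_indep k E t"
  proof (elim disjE)
    assume "has_clique a E s"
    then obtain S where "S \<subseteq> {0..<a}" "card S = s" "\<forall>x\<in>S. \<forall>y\<in>S. x \<noteq> y \<longrightarrow> E x y"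
      unfolding has_clique_def by blast
    then show ?thesis using sub unfolding has_clique_def by blast
  next
    assume "has_indep a E t"
    then obtain S where "S \<subseteq> {0..<a}" "card S = t" "\<forall>x\<in>S. \<forall>y\<in>S. x \<noteq> y \<longrightarrow> \<not> E x y"
      unfolding has_indep_def by blast
    then show ?thesis using sub unfolding has_indep_def by blast
  qed
qed

lemma ramsey_gt:
  assumes "\<not> RP s t k"
  shows "k < ramsey s t"
proof (rule ccontr)
  assume "\<not> k < ramsey s t"
  then have "ramsey s t \<le> k" by simp
  moreover have "RP s t (ramsey s t)" unfolding ramsey_eq using RP_exists by (metis LeastI)
  ultimately have "RP s t k" by (rule RP_mono[rotated])
  then show False using assms by simp
qed

lemma ramsey_from_set:
  assumes sg: "simple_graph n E" and nc: "\<not> has_clique n E s" and Y: "Y \<subseteq> {..<n}"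
    and noind: "\<And>I. I \<subseteq> Y \<Longrightarrow> card I = t \<Longrightarrow> \<not> (\<forall>x\<in>I. \<forall>y\<in>I. x \<noteq> y \<longrightarrow> \<not> E x y)"
  shows "card Y < ramsey s t"
proof (rule ramsey_gt)
  let ?k = "card Y"
  have finY: "finite Y" using Y finite_subset by blast
  obtain h where h: "bij_betw h {0..<?k} Y" using ex_bij_betw_nat_finite[OF finY] by blast
  have hin: "h i \<in> Y" if "i < ?k" for i using h that unfolding bij_betw_def by auto
  have inj: "inj_on h {0..<?k}" using h unfolding bij_betw_def by auto
  define E' where "E' = (\<lambda>i j. E (h i) (h j))"
  have sg': "simple_graph ?k E'"
    unfolding simple_graph_def E'_def using sg hin Y unfolding simple_graph_def by (meson lessThan_iff subsetD)
  have nc': "\<not> has_clique ?k E' s"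
  proof
    assume "has_clique ?k E' s"
    then obtain S where S: "S \<subseteq> {0..<?k}" "card S = s" "\<forall>x\<in>S. \<forall>y\<in>S. x \<noteq> y \<longrightarrow> E' x y"
      unfolding has_clique_def by blast
    have injS: "inj_on h S" using inj S(1) inj_on_subset by blast
    have "h ` S \<subseteq> {0..<n}"
    proof
      fix z assume "z \<in> h ` S"
      then obtain i where i: "i \<in> S" "z = h i" by auto
      then have "i < ?k" using S(1) by auto
      then have "z \<in> Y" using hin i by simp
      then show "z \<in> {0..<n}" using Y by auto
    qed
    moreover have "card (h ` S) = s" using card_image[OF injS] S(2) by simp
    moreover have "\<forall>x\<in>h ` S. \<forall>y\<in>h ` S. x \<noteq> y \<longrightarrow> E x y" using S(3) unfolding E'_def by auto
    ultimately have "has_clique n E s" unfolding has_clique_def by blast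
    then show False using nc by simp
  qed
  have ni': "\<not> has_indep ?k E' t"
  proof
    assume "has_indep ?k E' t"
    then obtain S where S: "S \<subseteq> {0..<?k}" "card S = t" "\<forall>x\<in>S. \<forall>y\<in>S. x \<noteq> y \<longrightarrow> \<not> E' x y"
      unfolding has_indep_def by blast
    have injS: "inj_on h S" using inj S(1) inj_on_subset by blast
    have "h ` S \<subseteq> Y" using S(1) hin by auto
    moreover have "card (h ` S) = t" using card_image[OF injS] S(2) by simp
    moreover have "\<forall>x\<in>h ` S. \<forall>y\<in>h ` S. x \<noteq> y \<longrightarrow> \<not> E x y" using S(3) unfolding E'_def by auto
    ultimately show False using noind by blast
  qed
  show "\<not> RP s t ?k" unfolding RP_def using sg' nc' ni' by blast
qed

lemma delete_lemma:
  assumes sg: "simple_graph n E" and nc: "\<not> has_clique n E s" and X: "X \<subseteq> {..<n}" and t: "t \<ge> 1"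
  shows "card X - card {I. I \<subseteq> X \<and> card I = t \<and> (\<forall>x\<in>I. \<forall>y\<in>I. x \<noteq> y \<longrightarrow> \<not> E x y)} < ramsey s t"
proof -
  let ?F = "{I. I \<subseteq> X \<and> card I = t \<and> (\<forall>x\<in>I. \<forall>y\<in>I. x \<noteq> y \<longrightarrow> \<not> E x y)}"
  have finX: "finite X" using X finite_subset by blast
  have finF: "finite ?F" by (rule finite_subset[of _ "Pow X"]) (use finX in auto)
  define T where "T = (\<lambda>I. SOME v. v \<in> I) ` ?F"
  have cT: "card T \<le> card ?F" unfolding T_def using finF by (rule card_image_le)
  define Y where "Y = X - T"
  have "card X - card T \<le> card Y" unfolding Y_def by (rule diff_card_le_card_Diff) (simp add: T_def finF)
  then have cY: "card X - card ?F \<le> card Y" using cT by linarith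
  have "card Y < ramsey s t"
  proof (rule ramsey_from_set[OF sg nc])
    show "Y \<subseteq> {..<n}" using X unfolding Y_def by auto
    fix I assume I: "I \<subseteq> Y" "card I = t"
    show "\<not> (\<forall>x\<in>I. \<forall>y\<in>I. x \<noteq> y \<longrightarrow> \<not> E x y)"
    proof
      assume ind: "\<forall>x\<in>I. \<forall>y\<in>I. x \<noteq> y \<longrightarrow> \<not> E x y"
      have IF: "I \<in> ?F" using I ind unfolding Y_def by auto
      have "I \<noteq> {}" using I t by auto
      then have "(SOME v. v \<in> I) \<in> I" by (simp add: some_in_eq)
      moreover have "(SOME v. v \<in> I) \<in> T" unfolding T_def using IF by blast
      ultimately show False using I(1) unfolding Y_def by blast
    qed
  qed
  then show ?thesis using cY by linarith
qed


lemma bad_from_mixing: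
  assumes G: "ndl_graph n d lam E" and n: "n \<ge> 2" and d: "d > 0" and R: "R \<subseteq> {..<n}"
  shows "real (card {v \<in> R. real (card {u \<in> R. E v u}) < real d / real n * real (card R) / 2}) * real (card R)
          \<le> 4 * lam\<^sup>2 * real n ^ 2 / real d ^ 2"
proof -
  define D where "D = real d / real n"
  let ?Bad = "{v \<in> R. real (card {u \<in> R. E v u}) < D * real (card R) / 2}"
  let ?b = "real (card ?Bad)" and ?r = "real (card R)"
  have Dp: "D > 0" unfolding D_def using d n by simp
  have finR: "finite R" using R finite_subset by blast
  have lam0: "lam \<ge> 0" using G unfolding ndl_graph_def by auto
  have e1: "eBR E ?Bad R \<le> ?b * (D * ?r / 2)"
  proof -
    have "eBR E ?Bad R \<le> (\<Sum>v\<in>?Bad. D * ?r / 2)"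
      unfolding eBR_def by (intro sum_mono) auto
    then show ?thesis by simp
  qed
  have sub: "?Bad \<subseteq> {..<n}" using R by auto
  have m: "\<bar>eBR E ?Bad R - D * ?b * ?r\<bar> \<le> lam * sqrt (?b * ?r)"
    using mixing[OF G n sub R] unfolding D_def by simp
  have e2: "D * ?b * ?r - lam * sqrt (?b * ?r) \<le> eBR E ?Bad R"
    using m by (simp add: abs_le_iff)
  define z where "z = sqrt (?b * ?r)"
  have z0: "z \<ge> 0" unfolding z_def by simp
  have zz: "z\<^sup>2 = ?b * ?r" unfolding z_def by simp
  have "D * z\<^sup>2 / 2 \<le> lam * z" using e1 e2 unfolding zz z_def by (simp add: algebra_simps)
  then have "z\<^sup>2 \<le> (2 * lam / D)\<^sup>2"
  proof (cases "z = 0")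
    case True then show ?thesis by simp
  next
    case False
    then have zp: "z > 0" using z0 by simp
    assume "D * z\<^sup>2 / 2 \<le> lam * z"
    then have "D * z / 2 \<le> lam" using zp by (simp add: power2_eq_square)
    then have "z \<le> 2 * lam / D" using Dp by (simp add: field_simps)
    then show ?thesis using z0 by (intro power_mono) auto
  qed
  also have "(2 * lam / D)\<^sup>2 = 4 * lam\<^sup>2 * real n ^ 2 / real d ^ 2"
    unfolding D_def using n d by (simp add: power_divide power_mult_distrib field_simps)
  finally show ?thesis unfolding zz D_def .
qed


lemma d_le_n:
  assumes "regular n E d" "n \<ge> 1"
  shows "d \<le> n"
proof -
  have "d = card {u. u < n \<and> E 0 u}" using assms unfolding regular_def by auto
  also have "\<dots> \<le> card {..<n}" by (intro card_mono) auto
  finally show ?thesis by simp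
qed

lemma finite_main:
  assumes G: "ndl_graph n d lam E" and nc: "\<not> has_clique n E s" and n: "n \<ge> 2" and d: "d > 0"
    and r0: "1 \<le> r0" "r0 \<le> real n" and Q: "4 * lam\<^sup>2 * real n ^ 2 / real d ^ 2 \<le> r0\<^sup>2"
    and t: "t \<ge> 1" and m: "m \<le> n"
  shows "real m - (2 * r0 * real m / real n) ^ t * real n powr (1 + 2 * ln (real n) * real n / real d) / fact t
          < real (ramsey s t)"
proof -
  define D where "D = real d / real n"
  define g where "g = - ln (1 - D/2)"
  define P where "P = real n / r0"
  define H where "H = 1 + 2 * ln (real n) * real n / real d"
  have sg: "simple_graph n E" and rg: "regular n E d" using G unfolding ndl_graph_def by auto
  have dn: "d \<le> n" using d_le_n[OF rg] n by simp
  have npos: "real n > 0" using n by simp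
  have Dp: "D > 0" "D \<le> 1" unfolding D_def using d dn npos by auto
  have gD: "g \<ge> D / 2"
  proof -
    have "ln (1 - D/2) \<le> (1 - D/2) - 1" using Dp by (intro ln_le_minus_one) auto
    then show ?thesis unfolding g_def by simp
  qed
  have gp: "g > 0" using gD Dp by simp
  have r0p: "r0 > 0" using r0 by simp
  have P1: "P \<ge> 1" unfolding P_def using r0 by simp
  have Pn: "P \<le> real n" unfolding P_def using r0 npos by (simp add: field_simps)
  have bad: "real (card {v \<in> R. real (card {u \<in> R. E v u}) < D * real (card R) / 2}) * real (card R) \<le> r0\<^sup>2"
    if "R \<subseteq> {..<n}" for R
    using bad_from_mixing[OF G n d that] Q unfolding D_def by linarith
  let ?F = "indeps E {..<n} t"
  have cm: "fact t * real (card ?F) \<le> (2*r0)^t * P powr hh r0 g (real n)"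
    using count_main[of D r0 n E, OF Dp(1) _ r0 bad, of "{..<n}" t] Dp unfolding P_def g_def by simp
  have hn: "hh r0 g (real n) \<le> H"
  proof -
    have "hh r0 g (real n) \<le> 1 + ln (real n / r0) / g" unfolding hh_def using gp r0 by auto
    also have "ln (real n / r0) / g \<le> ln (real n) / (D / 2)"
    proof -
      have l1: "ln (real n / r0) \<le> ln (real n)" using r0 npos by (simp add: ln_div)
      have l0: "ln (real n / r0) \<ge> 0" using r0 by simp
      have "ln (real n / r0) / g \<le> ln (real n / r0) / (D / 2)"
        using l0 gD Dp by (intro divide_left_mono) auto
      also have "\<dots> \<le> ln (real n) / (D / 2)" using l1 Dp by (intro divide_right_mono) auto
      finally show ?thesis .
    qed
    also have "ln (real n) / (D / 2) = 2 * ln (real n) * real n / real d"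
      unfolding D_def using npos d by (simp add: field_simps)
    finally show ?thesis unfolding H_def by simp
  qed
  have PH: "P powr hh r0 g (real n) \<le> real n powr H"
  proof -
    have "P powr hh r0 g (real n) \<le> real n powr hh r0 g (real n)"
      using P1 Pn hh_nonneg[OF r0p gp] by (intro powr_mono2) auto
    also have "\<dots> \<le> real n powr H" using hn n by (intro powr_mono) auto
    finally show ?thesis .
  qed
  have Fsub: "\<And>I. I \<in> ?F \<Longrightarrow> I \<subseteq> {..<n} \<and> card I = t" unfolding indeps_def by auto
  obtain X where X: "X \<subseteq> {..<n}" "card X = m"
    and cnt: "real (card {I \<in> ?F. I \<subseteq> X}) * real (card {..<n} choose t) \<le> real (card ?F) * real (m choose t)"
    using exists_good_subset[of "{..<n}" ?F t m] Fsub m by auto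
  let ?cnt = "card {I \<in> ?F. I \<subseteq> X}"
  have Feq: "{I \<in> ?F. I \<subseteq> X} = {I. I \<subseteq> X \<and> card I = t \<and> (\<forall>x\<in>I. \<forall>y\<in>I. x \<noteq> y \<longrightarrow> \<not> E x y)}"
    unfolding indeps_def using X by auto
  have del: "m - ?cnt < ramsey s t" using delete_lemma[OF sg nc X(1) t] unfolding Feq[symmetric] X(2) .
  have B0: "(2 * r0 * real m / real n) ^ t * real n powr H / fact t \<ge> 0" using r0p by simp
  have cntb: "real ?cnt \<le> (2 * r0 * real m / real n) ^ t * real n powr H / fact t"
  proof (cases "t \<le> n")
    case False
    have "?F = {}"
    proof (rule ccontr)
      assume "?F \<noteq> {}"
      then obtain I where "I \<in> ?F" by blast
      then have "I \<subseteq> {..<n}" "card I = t" using Fsub by auto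
      then have "t \<le> n" using card_mono[of "{..<n}" I] by auto
      then show False using False by simp
    qed
    then show ?thesis using B0 by simp
  next
    case True
    have cpos: "real (n choose t) > 0" using True by simp
    have "real ?cnt * real (n choose t) * real n ^ t \<le> real (card ?F) * (real (m choose t) * real n ^ t)"
    proof -
      have "real ?cnt * real (n choose t) * real n ^ t \<le> real (card ?F) * real (m choose t) * real n ^ t"
        using cnt by (intro mult_right_mono) auto
      then show ?thesis by (simp add: mult.assoc)
    qed
    also have "\<dots> \<le> real (card ?F) * (real (n choose t) * real m ^ t)"
      using choose_ratio[OF m, of t] by (intro mult_left_mono) auto
    finally have "real ?cnt * real n ^ t \<le> real (card ?F) * real m ^ t"
      using cpos by (simp add: mult.commute mult.left_commute)
    then have c1: "real ?cnt \<le> real (card ?F) * (real m / real n) ^ t"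
      using npos by (simp add: power_divide field_simps)
    have "real (card ?F) \<le> (2*r0)^t * P powr hh r0 g (real n) / fact t"
      using cm by (simp add: field_simps)
    also have "\<dots> \<le> (2*r0)^t * real n powr H / fact t"
      using PH r0p by (intro divide_right_mono mult_left_mono) auto
    finally have c2: "real (card ?F) \<le> (2*r0)^t * real n powr H / fact t" .
    have "real ?cnt \<le> (2*r0)^t * real n powr H / fact t * (real m / real n) ^ t"
      using c1 c2 by (meson mult_right_mono order_trans zero_le_divide_iff zero_le_power of_nat_0_le_iff)
    also have "\<dots> = (2 * r0 * real m / real n) ^ t * real n powr H / fact t"
      by (simp add: power_mult_distrib power_divide field_simps)
    finally show ?thesis .
  qed
  have "real m - real ?cnt \<le> real (m - ?cnt)" by simp
  then show ?thesis using del cntb unfolding H_def by linarith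
qed


lemma ln2_half: "ln (2::real) \<ge> 1/2"
proof -
  have "exp (1/2::real) ^ 2 = exp 1" by (simp add: exp_double[symmetric])
  also have "\<dots> \<le> 2 ^ 2" using exp_le by simp
  finally have "exp (1/2::real) \<le> 2" by (rule power2_le_imp_le) simp
  then have "ln (exp (1/2::real)) \<le> ln 2" by (subst ln_le_cancel_iff) auto
  then show ?thesis by simp
qed

lemma main_bound:
  fixes s N0 t :: nat and C c a eps K \<beta> c1 x :: real
  assumes s3: "s \<ge> 3" and Cp: "C > 0" and cp: "c > 0"
    and HN: "\<forall>n\<ge>N0. \<exists>d lam E. ndl_graph n d lam E \<and> \<not> has_clique n E s \<and>
            lam \<le> C * sqrt (real d) \<and> real d \<ge> c * real n powr (1 - 1 / (2 * real s - 3))"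
    and a_def: "a = 2 * real s - 3" and eps_def: "eps = min 1 (c / (8 * a\<^sup>2))"
    and K_def: "K = max 1 (2 * C / sqrt c)" and b_def: "\<beta> = (a + 1) / (2 * a)"
    and c1_def: "c1 = eps ^ (s - 2) / (8 * exp 1 * K)"
    and x_def: "x = real t"
    and h1: "x \<ge> exp 1"
    and hu: "eps * x / (ln x)\<^sup>2 \<ge> real N0 + 3 + K powr (1 / (1 - \<beta>))"
    and hm: "(eps * x / (ln x)\<^sup>2)\<^sup>2 \<ge> 2 * x"
    and hl: "a * ln x \<le> x / 4"
    and hw: "c1 * (x ^ (s - 1) / (ln x) ^ (2 * s - 4)) \<ge> 2"
  shows "real (ramsey s t) \<ge> c1 / 2 * (x ^ (s - 1) / (ln x) ^ (2 * s - 4))"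
proof -
  define L where "L = ln x"
  define u where "u = eps * x / L\<^sup>2"
  define X where "X = u powr a"
  define n where "n = nat \<lfloor>X\<rfloor>"
  define W where "W = x ^ (s - 1) / L ^ (2 * s - 4)"
  have a3: "a \<ge> 3" using s3 a_def by simp
  have xpos: "x > 0" using h1 exp_gt_zero[of 1] by linarith
  have L1: "L \<ge> 1" unfolding L_def using h1 xpos by (metis ln_exp ln_le_cancel_iff exp_gt_zero)
  have epsp: "eps > 0" "eps \<le> 1" "eps \<le> c / (8 * a\<^sup>2)" unfolding eps_def using cp a3 by auto
  have K1: "K \<ge> 1" "K \<ge> 2 * C / sqrt c" unfolding K_def by auto
  have bp: "\<beta> > 0" "\<beta> \<le> 1" "1 - \<beta> > 0" unfolding b_def using a3 by (auto simp: field_simps)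
  have U0: "real N0 + 3 + K powr (1 / (1 - \<beta>)) \<ge> 3" by simp
  have u3: "u \<ge> real N0 + 3 + K powr (1 / (1 - \<beta>))" using hu unfolding u_def L_def .
  have u1: "u \<ge> 1" using u3 U0 by linarith
  have ux: "u \<le> x"
  proof -
    have "eps * x \<le> 1 * x" using epsp xpos by (intro mult_right_mono) auto
    also have "\<dots> \<le> x * L\<^sup>2" using L1 xpos by (simp add: one_le_power)
    finally show ?thesis unfolding u_def using L1 by (simp add: divide_le_eq)
  qed
  have Xu: "X \<ge> u"
  proof -
    have "u powr 1 \<le> u powr a" using u1 a3 by (intro powr_mono) auto
    then show ?thesis unfolding X_def using u1 by simp
  qed
  have X0: "X \<ge> 0" unfolding X_def by simp
  have nX: "real n \<le> X" "real n > X - 1" unfolding n_def using X0 by linarith+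
  have Kp0: "K powr (1 / (1 - \<beta>)) \<ge> 0" by simp
  have "real N0 \<le> real n" using nX u3 Xu Kp0 by linarith
  then have nN0: "n \<ge> N0" by simp
  have n2: "real n \<ge> 2" using nX u3 Xu U0 by linarith
  have npos: "real n > 0" using n2 by simp
  have nX2: "real n \<ge> X / 2" using nX Xu u1 U0 u3 by linarith
  obtain d lam E where G: "ndl_graph n d lam E" and nc: "\<not> has_clique n E s"
    and lamC: "lam \<le> C * sqrt (real d)" and dlow: "real d \<ge> c * real n powr (1 - 1 / a)"
    using HN nN0 unfolding a_def by blast
  have lam0: "lam \<ge> 0" using G unfolding ndl_graph_def by auto
  have dpos: "real d > 0" using dlow cp npos by (smt (verit) powr_gt_zero mult_pos_pos)
  then have d0: "d > 0" by simp
  have e1: "a * \<beta> = real (s - 1)" unfolding b_def a_def using s3 by (simp add: field_simps of_nat_diff)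
  have e2: "a * (1 - \<beta>) = real (s - 2)" unfolding b_def a_def using s3 by (simp add: field_simps of_nat_diff)
  have e3: "2 - (1 - 1 / a) = 2 * \<beta>" unfolding b_def using a3 by (simp add: field_simps)
  have e4: "1 - (1 - 1 / a) = 1 / a" by simp
  define r0 where "r0 = K * real n powr \<beta>"
  have nb1: "real n powr \<beta> \<ge> 1" using n2 bp by (simp add: ge_one_powr_ge_zero)
  have r01: "r0 \<ge> 1" unfolding r0_def using K1 nb1 by (metis mult_mono' mult_1 zero_le_one order_trans)
  have Xpowr: "X powr p = u powr (a * p)" for p unfolding X_def by (simp add: powr_powr)
  have nlow: "real n powr p \<ge> u powr (a * p) / 2" if "0 \<le> p" "p \<le> 1" for p
  proof -
    have "(X / 2) powr p \<le> real n powr p" using nX2 X0 that by (intro powr_mono2) auto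
    moreover have "(X / 2) powr p = X powr p / 2 powr p" using X0 by (simp add: powr_divide)
    moreover have "2 powr p \<le> 2 powr (1::real)" using that by (intro powr_mono) auto
    then have "2 powr p \<le> 2" by simp
    then have "X powr p / 2 \<le> X powr p / 2 powr p"
      by (intro divide_left_mono) auto
    ultimately have "X powr p / 2 \<le> real n powr p" by linarith
    then show ?thesis unfolding Xpowr .
  qed
  have nbeta: "real n powr \<beta> \<ge> u ^ (s - 1) / 2"
    using nlow[of \<beta>] bp e1 u1 by (simp add: powr_realpow)
  have n1b: "real n powr (1 - \<beta>) \<ge> u ^ (s - 2) / 2"
    using nlow[of "1 - \<beta>"] bp e2 u1 by (simp add: powr_realpow)
  have nsplit: "real n powr \<beta> * real n powr (1 - \<beta>) = real n"
    using npos by (simp add: powr_add[symmetric])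
  have r0n: "r0 \<le> real n"
  proof -
    have "real n \<ge> K powr (1 / (1 - \<beta>))" using nX Xu u3 by linarith
    then have "real n powr (1 - \<beta>) \<ge> (K powr (1 / (1 - \<beta>))) powr (1 - \<beta>)"
      using bp by (intro powr_mono2) auto
    also have "(K powr (1 / (1 - \<beta>))) powr (1 - \<beta>) = K" using bp K1 by (simp add: powr_powr)
    finally have "K * real n powr \<beta> \<le> real n powr (1 - \<beta>) * real n powr \<beta>"
      by (intro mult_right_mono) auto
    then show ?thesis unfolding r0_def using nsplit by (simp add: mult.commute)
  qed
  have Q: "4 * lam\<^sup>2 * real n ^ 2 / real d ^ 2 \<le> r0\<^sup>2"
  proof -
    have "lam\<^sup>2 \<le> (C * sqrt (real d))\<^sup>2" using lam0 lamC by (intro power_mono) auto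
    also have "\<dots> = C\<^sup>2 * real d" using dpos by (simp add: power_mult_distrib)
    finally have l2: "lam\<^sup>2 \<le> C\<^sup>2 * real d" .
    have "4 * lam\<^sup>2 * real n ^ 2 / real d ^ 2 \<le> 4 * (C\<^sup>2 * real d) * real n ^ 2 / real d ^ 2"
      using l2 dpos by (intro divide_right_mono mult_right_mono) auto
    also have "\<dots> = 4 * C\<^sup>2 * (real n ^ 2 / real d)" using dpos by (simp add: power2_eq_square field_simps)
    also have "real n ^ 2 / real d \<le> real n ^ 2 / (c * real n powr (1 - 1 / a))"
      using dlow dpos cp npos by (intro divide_left_mono) auto
    also have "real n ^ 2 / (c * real n powr (1 - 1 / a)) = real n powr (2 * \<beta>) / c"
    proof -
      have n2p: "real n ^ 2 = real n powr 2" using npos by (simp add: powr_realpow)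
      have "real n ^ 2 / real n powr (1 - 1 / a) = real n powr (2 - (1 - 1 / a))"
        unfolding n2p by (rule powr_diff[symmetric])
      then show ?thesis unfolding e3 by (metis divide_divide_eq_left mult.commute)
    qed
    also have "real n powr (2 * \<beta>) = (real n powr \<beta>)\<^sup>2" using npos by (simp add: powr_powr[symmetric] powr_realpow mult.commute)
    finally have "4 * lam\<^sup>2 * real n ^ 2 / real d ^ 2 \<le> 4 * C\<^sup>2 * ((real n powr \<beta>)\<^sup>2 / c)"
      using cp by (simp add: mult_left_mono)
    also have "\<dots> = (2 * C / sqrt c)\<^sup>2 * (real n powr \<beta>)\<^sup>2" using cp by (simp add: power_divide power_mult_distrib)
    also have "\<dots> \<le> K\<^sup>2 * (real n powr \<beta>)\<^sup>2"
      using K1 Cp cp by (intro mult_right_mono power_mono) auto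
    also have "\<dots> = r0\<^sup>2" unfolding r0_def by (simp add: power_mult_distrib)
    finally show ?thesis .
  qed
  define m where "m = nat \<lfloor>real n * x / (4 * exp 1 * r0)\<rfloor>"
  have r0p: "r0 > 0" using r01 by simp
  have mq0: "real n * x / (4 * exp 1 * r0) \<ge> 0" using npos xpos r0p by simp
  have mX: "real m \<le> real n * x / (4 * exp 1 * r0)" "real m > real n * x / (4 * exp 1 * r0) - 1"
    unfolding m_def using mq0 by linarith+
  have xr0: "x \<le> r0"
  proof -
    have "x \<le> u\<^sup>2 / 2" using hm unfolding u_def L_def by simp
    also have "u\<^sup>2 \<le> u ^ (s - 1)" using u1 s3 by (intro power_increasing) auto
    then have "u\<^sup>2 / 2 \<le> u ^ (s - 1) / 2" by simp
    also have "\<dots> \<le> real n powr \<beta>" by (rule nbeta)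
    also have "\<dots> \<le> r0" unfolding r0_def using K1 nb1 by (simp add: mult_le_cancel_right1)
    finally show ?thesis .
  qed
  have mn: "m \<le> n"
  proof -
    have "real n * x / (4 * exp 1 * r0) \<le> real n * r0 / (1 * r0)"
    proof -
      have e41: "1 \<le> 4 * exp (1::real)" using exp_gt_one[of "1::real"] by linarith
      show ?thesis using xr0 npos xpos r0p e41 by (intro frac_le mult_left_mono mult_right_mono) auto
    qed
    then have "real m \<le> real n" using mX(1) r0p by simp
    then show ?thesis by simp
  qed
  have t1: "t \<ge> 1" using xpos x_def by simp
  have fm: "real m - (2 * r0 * real m / real n) ^ t * real n powr (1 + 2 * ln (real n) * real n / real d) / fact t
          < real (ramsey s t)"
    by (rule finite_main[OF G nc _ d0 r01 r0n Q t1 mn]) (use n2 in simp)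
  define H where "H = 1 + 2 * ln (real n) * real n / real d"
  have lnn: "ln (real n) \<le> a * L"
  proof -
    have "ln (real n) \<le> ln X" using nX npos by simp
    also have "ln X = a * ln u" unfolding X_def using u1 by (simp add: ln_powr)
    also have "\<dots> \<le> a * L" unfolding L_def using ux u1 a3 by (intro mult_left_mono) auto
    finally show ?thesis .
  qed
  have lnn0: "ln (real n) \<ge> 0" using n2 by simp
  have nd: "real n / real d \<le> u / c"
  proof -
    have "real n / real d \<le> real n / (c * real n powr (1 - 1 / a))"
      using dlow dpos cp npos by (intro divide_left_mono) auto
    also have "\<dots> = real n powr (1 / a) / c"
    proof -
      have "real n / real n powr (1 - 1 / a) = real n powr 1 / real n powr (1 - 1 / a)"
        using npos by simp
      also have "\<dots> = real n powr (1 - (1 - 1 / a))" by (rule powr_diff[symmetric])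
      finally have "real n / real n powr (1 - 1 / a) = real n powr (1 / a)" by simp
      then show ?thesis by (metis divide_divide_eq_left mult.commute)
    qed
    also have "real n powr (1 / a) \<le> X powr (1 / a)" using nX npos a3 by (intro powr_mono2) auto
    also have "X powr (1 / a) = u" unfolding Xpowr using a3 u1 by simp
    finally show ?thesis using cp by (simp add: divide_right_mono)
  qed
  have Hln: "H * ln (real n) \<le> x / 2"
  proof -
    have "H * ln (real n) = ln (real n) + 2 * (ln (real n))\<^sup>2 * (real n / real d)"
      unfolding H_def by (simp add: algebra_simps power2_eq_square)
    also have "\<dots> \<le> a * L + 2 * (a * L)\<^sup>2 * (u / c)"
      using lnn lnn0 nd dpos npos by (intro add_mono mult_mono mult_left_mono power_mono) auto
    also have "2 * (a * L)\<^sup>2 * (u / c) = 2 * a\<^sup>2 * eps * x / c"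
      unfolding u_def using L1 cp by (simp add: power_mult_distrib field_simps)
    also have "\<dots> \<le> 2 * a\<^sup>2 * (c / (8 * a\<^sup>2)) * x / c"
      using epsp xpos cp by (intro divide_right_mono mult_right_mono mult_left_mono) auto
    also have "\<dots> = x / 4" using a3 cp by (simp add: field_simps)
    finally show ?thesis using hl unfolding L_def by simp
  qed
  have err: "(2 * r0 * real m / real n) ^ t * real n powr H / fact t \<le> 1"
  proof -
    have q: "2 * r0 * real m / real n \<le> x / (2 * exp 1)"
    proof -
      have "2 * r0 * real m \<le> 2 * r0 * (real n * x / (4 * exp 1 * r0))"
        using mX(1) r0p by (intro mult_left_mono) auto
      also have "\<dots> = real n * (x / (2 * exp 1))" using r0p by (simp add: field_simps)
      finally show ?thesis using npos by (simp add: divide_le_eq mult.commute)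
    qed
    have "(2 * r0 * real m / real n) ^ t \<le> (x / (2 * exp 1)) ^ t"
      using q r0p npos by (intro power_mono) auto
    also have "\<dots> = (real t / exp 1) ^ t / 2 ^ t" unfolding x_def by (simp add: power_divide field_simps)
    also have "\<dots> \<le> fact t / 2 ^ t" using fact_lower[of t] by (intro divide_right_mono) auto
    finally have p1: "(2 * r0 * real m / real n) ^ t \<le> fact t / 2 ^ t" .
    have p2: "real n powr H \<le> 2 ^ t"
    proof -
      have "real n powr H = exp (H * ln (real n))" using npos by (simp add: powr_def)
      also have "\<dots> \<le> exp (real t * ln 2)"
      proof -
        have "x / 2 \<le> x * ln 2" using ln2_half xpos by (simp add: mult_left_mono[of "1/2" "ln 2" x, simplified])
        then show ?thesis using Hln unfolding x_def by simp
      qed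
      also have "\<dots> = 2 ^ t" by (simp add: exp_of_nat_mult[symmetric] powr_realpow[symmetric] powr_def)
      finally show ?thesis .
    qed
    have "(2 * r0 * real m / real n) ^ t * real n powr H / fact t \<le> (fact t / 2 ^ t) * 2 ^ t / fact t"
      using p1 p2 by (intro divide_right_mono mult_mono) auto
    also have "\<dots> = 1" by simp
    finally show ?thesis .
  qed
  have rm: "real (ramsey s t) > real m - 1" using fm err unfolding H_def by linarith
  then have "ramsey s t \<ge> m" by linarith
  then have rm2: "real (ramsey s t) \<ge> real m" by simp
  have "real n * x / (4 * exp 1 * r0) = x * real n powr (1 - \<beta>) / (4 * exp 1 * K)"
    unfolding r0_def using npos nsplit[symmetric] K1 by (simp add: field_simps)
  also have "\<dots> \<ge> x * (u ^ (s - 2) / 2) / (4 * exp 1 * K)"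
    using n1b xpos K1 by (intro divide_right_mono mult_left_mono) auto
  finally have mlow: "real n * x / (4 * exp 1 * r0) \<ge> x * u ^ (s - 2) / (8 * exp 1 * K)" by simp
  have xu: "x * u ^ (s - 2) = eps ^ (s - 2) * W"
  proof -
    have "x * u ^ (s - 2) = eps ^ (s - 2) * (x * x ^ (s - 2) / (L\<^sup>2) ^ (s - 2))"
      unfolding u_def by (simp add: power_divide power_mult_distrib)
    also have "x * x ^ (s - 2) = x ^ (s - 1)"
    proof -
      have "s - 1 = Suc (s - 2)" using s3 by simp
      then show ?thesis by (simp only: power_Suc)
    qed
    also have "(L\<^sup>2) ^ (s - 2) = L ^ (2 * s - 4)" by (simp add: power_mult[symmetric] diff_mult_distrib2)
    finally show ?thesis unfolding W_def by simp
  qed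
  have "real m > c1 * W - 1"
    using mX(2) mlow xu unfolding c1_def by (simp add: field_simps)
  then have "real (ramsey s t) \<ge> c1 * W - 1" using rm2 by linarith
  moreover have "c1 * W \<ge> 2" using hw unfolding W_def L_def .
  ultimately have "real (ramsey s t) \<ge> c1 / 2 * W" by linarith
  then show ?thesis unfolding W_def L_def .
qed


lemma lim1: "filterlim (\<lambda>x::real. x / ln x ^ 4) at_top at_top" by real_asymp
lemma lim2: "filterlim (\<lambda>x::real. x / ln x ^ 2) at_top at_top" by real_asymp
lemma lim3: "filterlim (\<lambda>x::real. x / ln x) at_top at_top" by real_asymp
lemma lim4: "filterlim (\<lambda>x::real. x) at_top at_top" by real_asymp

theorem theorem4:
  fixes s :: nat and C c :: real
  assumes "s \<ge> 3" and "C > 0" and "c > 0"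
    and "\<exists>N. \<forall>n\<ge>N. \<exists>d lam E. ndl_graph n d lam E \<and> \<not> has_clique n E s \<and>
            lam \<le> C * sqrt (real d) \<and>
            real d \<ge> c * real n powr (1 - 1 / (2 * real s - 3))"
  shows "\<exists>c' > 0. \<exists>T. \<forall>t\<ge>T.
           real (ramsey s t) \<ge> c' * real t ^ (s - 1) / (ln (real t)) ^ (2 * s - 4)"
proof -
  obtain N0 where HN: "\<forall>n\<ge>N0. \<exists>d lam E. ndl_graph n d lam E \<and> \<not> has_clique n E s \<and>
            lam \<le> C * sqrt (real d) \<and> real d \<ge> c * real n powr (1 - 1 / (2 * real s - 3))"
    using assms(4) by blast
  define a where "a = 2 * real s - 3"
  define eps where "eps = min 1 (c / (8 * a\<^sup>2))"
  define K where "K = max 1 (2 * C / sqrt c)"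
  define \<beta> where "\<beta> = (a + 1) / (2 * a)"
  define c1 where "c1 = eps ^ (s - 2) / (8 * exp 1 * K)"
  define U0 where "U0 = real N0 + 3 + K powr (1 / (1 - \<beta>))"
  have a3: "a \<ge> 3" using assms(1) unfolding a_def by simp
  have epsp: "eps > 0" unfolding eps_def using assms(3) a3 by simp
  have K1: "K \<ge> 1" unfolding K_def by simp
  have c1p: "c1 > 0" unfolding c1_def using epsp K1 by simp
  have ev: "eventually (\<lambda>x. exp 1 \<le> x \<and> U0 / eps \<le> x / ln x ^ 2 \<and> 2 / eps\<^sup>2 \<le> x / ln x ^ 4
      \<and> 4 * a \<le> x / ln x \<and> 2 / c1 \<le> x \<and> 1 \<le> x / ln x ^ 2) at_top"
    using lim1 lim2 lim3 lim4 unfolding filterlim_at_top by (intro eventually_conj) auto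
  then obtain T0 where T0: "\<And>x. x \<ge> T0 \<Longrightarrow> exp 1 \<le> x \<and> U0 / eps \<le> x / ln x ^ 2 \<and> 2 / eps\<^sup>2 \<le> x / ln x ^ 4
      \<and> 4 * a \<le> x / ln x \<and> 2 / c1 \<le> x \<and> 1 \<le> x / ln x ^ 2"
    unfolding eventually_at_top_linorder by blast
  have main: "real (ramsey s t) \<ge> c1 / 2 * (real t ^ (s - 1) / (ln (real t)) ^ (2 * s - 4))"
    if t: "t \<ge> nat \<lceil>T0\<rceil>" for t
  proof -
    define x where "x = real t"
    define L where "L = ln x"
    have xT: "x \<ge> T0" unfolding x_def using t real_nat_ceiling_ge[of T0] by linarith
    note C = T0[OF xT]
    have h1: "x \<ge> exp 1" using C by simp
    have xpos: "x > 0" using h1 exp_gt_zero[of 1] by linarith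
    have L1: "L \<ge> 1" unfolding L_def using h1 xpos by (metis ln_exp ln_le_cancel_iff exp_gt_zero)
    have L2p: "L\<^sup>2 > 0" using L1 by simp
    have hu: "eps * x / L\<^sup>2 \<ge> U0"
    proof -
      have "U0 / eps \<le> x / L\<^sup>2" using C unfolding L_def by simp
      then have "U0 \<le> eps * (x / L\<^sup>2)" using epsp by (simp add: divide_le_eq mult.commute)
      then show ?thesis by simp
    qed
    have hm: "(eps * x / L\<^sup>2)\<^sup>2 \<ge> 2 * x"
    proof -
      have q: "2 / eps\<^sup>2 \<le> x / L ^ 4" using C unfolding L_def by simp
      have "(eps * x / L\<^sup>2)\<^sup>2 = eps\<^sup>2 * x * (x / L ^ 4)" using L1 by (simp add: field_simps power2_eq_square power4_eq_xxxx)
      also have "\<dots> \<ge> eps\<^sup>2 * x * (2 / eps\<^sup>2)" using q epsp xpos by (intro mult_left_mono) auto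
      finally show ?thesis using epsp by simp
    qed
    have hl: "a * L \<le> x / 4"
    proof -
      have "4 * a \<le> x / L" using C unfolding L_def by simp
      then have "4 * a * L \<le> x" using L1 by (simp add: le_divide_eq)
      then show ?thesis by simp
    qed
    have hw: "c1 * (x ^ (s - 1) / L ^ (2 * s - 4)) \<ge> 2"
    proof -
      have W: "x ^ (s - 1) / L ^ (2 * s - 4) = x * (x / L\<^sup>2) ^ (s - 2)"
      proof -
        have "s - 1 = Suc (s - 2)" using assms(1) by simp
        then have "x ^ (s - 1) = x * x ^ (s - 2)" by (simp only: power_Suc)
        moreover have "L ^ (2 * s - 4) = (L\<^sup>2) ^ (s - 2)" by (simp add: power_mult[symmetric] diff_mult_distrib2)
        ultimately show ?thesis by (simp add: power_divide)
      qed
      have "1 \<le> x / L\<^sup>2" using C unfolding L_def by simp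
      then have "1 \<le> (x / L\<^sup>2) ^ (s - 2)" by (rule one_le_power)
      then have "x \<le> x * (x / L\<^sup>2) ^ (s - 2)" using xpos by (simp add: mult_le_cancel_left1)
      moreover have "2 \<le> c1 * x" using C c1p by (simp add: divide_le_eq mult.commute)
      ultimately show ?thesis unfolding W using c1p by (smt (verit) mult_left_mono)
    qed
    have "real (ramsey s t) \<ge> c1 / 2 * (x ^ (s - 1) / (ln x) ^ (2 * s - 4))"
      by (rule main_bound[OF assms(1-3) HN a_def eps_def K_def \<beta>_def c1_def x_def h1])
         (use hu hm hl hw in \<open>simp_all add: L_def U0_def\<close>)
    then show ?thesis unfolding x_def .
  qed
  show ?thesis
  proof (intro exI[of _ "c1 / 2"] conjI exI[of _ "nat \<lceil>T0\<rceil>"] allI impI)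
    show "c1 / 2 > 0" using c1p by simp
    fix t assume "t \<ge> nat \<lceil>T0\<rceil>"
    then show "real (ramsey s t) \<ge> c1 / 2 * real t ^ (s - 1) / (ln (real t)) ^ (2 * s - 4)"
      using main by (simp add: times_divide_eq_right)
  qed
qed


end
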